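(* Let $\Delta$ be a distribution such that $\mathrm{tr}_{\tilde q}(\Delta)$ is well-defined. Then for every context $O[\cdot]$: $O[\Delta] \rightsquigarrow_\pi \Delta'$ if and only if $O[\mathrm{tr}_{\tilde q}(\Delta)] \rightsquigarrow_\pi \mathrm{tr}_{\tilde q}(\Delta')$.
   Context: lqCCS has a discard process $\mathbf{0}_{\tilde q}$, a deadlocked process that keeps and hides the qubits $\tilde q$. Extended configurations $\langle\!\langle \rho, P, R \rangle\!\rangle$ consist of a density operator, a process and an observer (a process without $\tau$ and restriction whose sums are only sums of inputs on distinct channels); $\bot$ is the deadlock configuration. The partial trace of a configuration over $\tilde q$ is $\mathrm{tr}_{\tilde q}(\langle\!\langle \rho, P, R \rangle\!\rangle) = \langle\!\langle \mathrm{tr}_{\tilde q}(\rho), P', R \rangle\!\rangle$ when $P \equiv P' \parallel \mathbf{0}_{\tilde q}$, with $\mathrm{tr}_{\tilde q}(\bot) = \bot$, extended to distributions by linearity (well-defined only when every configuration in the support discards $\tilde q$). Contexts are $O[\cdot] = [\cdot] \parallel R'$ with $R'$ an observer. $\rightsquigarrow_\pi$ is the enhanced semantics with index $\pi = \diamond$ when the process makes a standard probabilistic reduction (including superoperator application $\mathcal{E}_{\tilde x}(\rho)$ and measurements producing $\sum_m p_m\cdot\overline{\langle\!\langle \rho_m/p_m, P[m/y], R \rangle\!\rangle}$ with $\rho_m = (M_m)_{\tilde x}(\rho)$, $p_m = \mathrm{tr}(\rho_m)$, $[m/y]$ denoting substitution), or $\pi \in \{\ell,r\}^*$ naming the observer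 component that acts (observer superoperator/measurement, or communication with the process); transitions are lifted to distributions by linearity. *)

theory Defs
  imports "HOL-Probability.Probability_Mass_Function"
begin

type_synonym qubit = nat
type_synonym chan = nat
type_synonym var = nat

datatype val = Qb qubit | Nv nat
datatype expr = Var var | Val val
datatype bexp = BTrue | BEq expr expr | BNot bexp | BAnd bexp bexp

text \<open>Basis states are assignments of qubit names to bits; operators and density
  operators are matrices indexed by assignments.  An operator acting on a k-tuple of
  qubits is indexed by assignments of the positions 0..k-1.\<close>
type_synonym asgn = "nat \<Rightarrow> bool"
type_synonym op = "asgn \<Rightarrow> asgn \<Rightarrow> complex"
type_synonym dens = "asgn \<Rightarrow> asgn \<Rightarrow> complex"
text \<open>quantum state: the set of qubit names in scope and a density operator on them\<close>
type_synonym qst = "nat set \<times> dens"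

datatype proc =
    Nil
  | Discard "expr list"
  | Out chan expr proc
  | Inp chan var proc
  | Tau proc
  | SOp "op list" "expr list" proc      \<comment> \<open>E_x.P, E given by Kraus operators\<close>
  | Meas "op list" "expr list" var proc \<comment> \<open>M_x -> y.P, measurement operators M_m\<close>
  | Sum proc proc
  | Par proc proc
  | Res chan proc
  | If bexp proc proc

datatype act = TauA | OutA chan val | InA chan val

fun chan_of :: "act \<Rightarrow> chan option" where
  "chan_of TauA = None"
| "chan_of (OutA c v) = Some c"
| "chan_of (InA c v) = Some c"

fun esubst :: "var \<Rightarrow> val \<Rightarrow> expr \<Rightarrow> expr" where
  "esubst x v (Var y) = (if y = x then Val v else Var y)"
| "esubst x v (Val w) = Val w"

fun bsubst :: "var \<Rightarrow> val \<Rightarrow> bexp \<Rightarrow> bexp" where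
  "bsubst x v BTrue = BTrue"
| "bsubst x v (BEq e1 e2) = BEq (esubst x v e1) (esubst x v e2)"
| "bsubst x v (BNot b) = BNot (bsubst x v b)"
| "bsubst x v (BAnd b1 b2) = BAnd (bsubst x v b1) (bsubst x v b2)"

fun subst :: "var \<Rightarrow> val \<Rightarrow> proc \<Rightarrow> proc" where
  "subst x v Nil = Nil"
| "subst x v (Discard es) = Discard (map (esubst x v) es)"
| "subst x v (Out c e P) = Out c (esubst x v e) (subst x v P)"
| "subst x v (Inp c y P) = Inp c y (if y = x then P else subst x v P)"
| "subst x v (Tau P) = Tau (subst x v P)"
| "subst x v (SOp K es P) = SOp K (map (esubst x v) es) (subst x v P)"
| "subst x v (Meas M es y P) = Meas M (map (esubst x v) es) y (if y = x then P else subst x v P)"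
| "subst x v (Sum P Q) = Sum (subst x v P) (subst x v Q)"
| "subst x v (Par P Q) = Par (subst x v P) (subst x v Q)"
| "subst x v (Res c P) = Res c (subst x v P)"
| "subst x v (If b P Q) = If (bsubst x v b) (subst x v P) (subst x v Q)"

fun bval :: "bexp \<Rightarrow> bool option" where
  "bval BTrue = Some True"
| "bval (BEq (Val a) (Val b)) = Some (a = b)"
| "bval (BEq _ _) = None"
| "bval (BNot b) = map_option Not (bval b)"
| "bval (BAnd b1 b2) = (case (bval b1, bval b2) of (Some x, Some y) \<Rightarrow> Some (x \<and> y) | _ \<Rightarrow> None)"

fun fn :: "proc \<Rightarrow> chan set" where
  "fn Nil = {}"
| "fn (Discard es) = {}"
| "fn (Out c e P) = insert c (fn P)"
| "fn (Inp c x P) = insert c (fn P)"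
| "fn (Tau P) = fn P"
| "fn (SOp K es P) = fn P"
| "fn (Meas M es y P) = fn P"
| "fn (Sum P Q) = fn P \<union> fn Q"
| "fn (Par P Q) = fn P \<union> fn Q"
| "fn (Res c P) = fn P - {c}"
| "fn (If b P Q) = fn P \<union> fn Q"

fun qe :: "expr \<Rightarrow> qubit set" where
  "qe (Val (Qb q)) = {q}"
| "qe _ = {}"

fun qbits :: "proc \<Rightarrow> qubit set" where
  "qbits Nil = {}"
| "qbits (Discard es) = \<Union> (qe ` set es)"
| "qbits (Out c e P) = qe e \<union> qbits P"
| "qbits (Inp c x P) = qbits P"
| "qbits (Tau P) = qbits P"
| "qbits (SOp K es P) = \<Union> (qe ` set es) \<union> qbits P"
| "qbits (Meas M es y P) = \<Union> (qe ` set es) \<union> qbits P"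
| "qbits (Sum P Q) = qbits P \<union> qbits Q"
| "qbits (Par P Q) = qbits P \<union> qbits Q"
| "qbits (Res c P) = qbits P"
| "qbits (If b P Q) = qbits P \<union> qbits Q"

text \<open>Linearity of qubit usage (approximating the linear type system of lqCCS):
  parallel components own disjoint qubits, a sent qubit is not used afterwards,
  discarded qubits are distinct.\<close>
fun lin :: "proc \<Rightarrow> bool" where
  "lin Nil = True"
| "lin (Discard es) = distinct es"
| "lin (Out c e P) = (qe e \<inter> qbits P = {} \<and> lin P)"
| "lin (Inp c x P) = lin P"
| "lin (Tau P) = lin P"
| "lin (SOp K es P) = lin P"
| "lin (Meas M es y P) = lin P"
| "lin (Sum P Q) = (lin P \<and> lin Q)"
| "lin (Par P Q) = (lin P \<and> lin Q \<and> qbits P \<inter> qbits Q = {})"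
| "lin (Res c P) = lin P"
| "lin (If b P Q) = (lin P \<and> lin Q)"

fun sum_chans :: "proc \<Rightarrow> chan list" where
  "sum_chans (Sum P Q) = sum_chans P @ sum_chans Q"
| "sum_chans (Inp c x P) = [c]"
| "sum_chans _ = []"

fun is_obs :: "proc \<Rightarrow> bool" and inp_sum :: "proc \<Rightarrow> bool" where
  "is_obs Nil = True"
| "is_obs (Discard es) = True"
| "is_obs (Out c e P) = is_obs P"
| "is_obs (Inp c x P) = is_obs P"
| "is_obs (Tau P) = False"
| "is_obs (SOp K es P) = is_obs P"
| "is_obs (Meas M es y P) = is_obs P"
| "is_obs (Sum P Q) = (inp_sum P \<and> inp_sum Q \<and> distinct (sum_chans (Sum P Q)))"
| "is_obs (Par P Q) = (is_obs P \<and> is_obs Q)"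
| "is_obs (Res c P) = False"
| "is_obs (If b P Q) = (is_obs P \<and> is_obs Q)"
| "inp_sum (Sum P Q) = (inp_sum P \<and> inp_sum Q)"
| "inp_sum (Inp c x P) = is_obs P"
| "inp_sum Nil = False"
| "inp_sum (Discard es) = False"
| "inp_sum (Out c e P) = False"
| "inp_sum (Tau P) = False"
| "inp_sum (SOp K es P) = False"
| "inp_sum (Meas M es y P) = False"
| "inp_sum (Par P Q) = False"
| "inp_sum (Res c P) = False"
| "inp_sum (If b P Q) = False"

subsection \<open>Linear algebra on assignments\<close>

definition asg :: "nat set \<Rightarrow> asgn set" where
  "asg S = {c. \<forall>i. c i \<longrightarrow> i \<in> S}"

definition ovr :: "nat set \<Rightarrow> asgn \<Rightarrow> asgn \<Rightarrow> asgn" where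
  "ovr S c a = (\<lambda>j. if j \<in> S then c j else a j)"

text \<open>local (positional) view of the qubits qs in a global assignment\<close>
definition loc :: "qubit list \<Rightarrow> asgn \<Rightarrow> asgn" where
  "loc qs a = (\<lambda>i. i < length qs \<and> a (qs ! i))"

text \<open>write a positional assignment c back on the qubits qs\<close>
definition upd :: "qubit list \<Rightarrow> asgn \<Rightarrow> asgn \<Rightarrow> asgn" where
  "upd qs c a = (\<lambda>j. if j \<in> set qs then c (LEAST i. i < length qs \<and> qs ! i = j) else a j)"

text \<open>A_qs rho A_qs^dagger\<close>
definition apply_op :: "op \<Rightarrow> qubit list \<Rightarrow> dens \<Rightarrow> dens" where
  "apply_op A qs \<rho> = (\<lambda>a b. \<Sum>c\<in>asg {..<length qs}. \<Sum>d\<in>asg {..<length qs}.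
      A (loc qs a) c * \<rho> (upd qs c a) (upd qs d b) * cnj (A (loc qs b) d))"

text \<open>superoperator E_qs(rho) given by a list of Kraus operators\<close>
definition apply_sop :: "op list \<Rightarrow> qubit list \<Rightarrow> dens \<Rightarrow> dens" where
  "apply_sop Ks qs \<rho> = (\<lambda>a b. \<Sum>K\<leftarrow>Ks. apply_op K qs \<rho> a b)"

definition qtrace :: "qst \<Rightarrow> complex" where
  "qtrace s = (\<Sum>a\<in>asg (fst s). snd s a a)"

definition ptrace :: "qubit list \<Rightarrow> qst \<Rightarrow> qst" where
  "ptrace qs s = (fst s - set qs, \<lambda>a b.
     if (\<forall>q\<in>set qs. \<not> a q \<and> \<not> b q)
     then (\<Sum>c\<in>asg (set qs). snd s (ovr (set qs) c a) (ovr (set qs) c b)) else 0)"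

text \<open>measurement: rho_m = (M_m)_qs(rho), p_m = tr rho_m, post-state rho_m / p_m\<close>
definition meas_prob :: "op list \<Rightarrow> qubit list \<Rightarrow> qst \<Rightarrow> nat \<Rightarrow> real" where
  "meas_prob M qs s m = Re (qtrace (fst s, apply_op (M ! m) qs (snd s)))"

definition meas_post :: "op list \<Rightarrow> qubit list \<Rightarrow> qst \<Rightarrow> nat \<Rightarrow> qst" where
  "meas_post M qs s m = (fst s, \<lambda>a b. apply_op (M ! m) qs (snd s) a b / complex_of_real (meas_prob M qs s m))"

text \<open>sum_m p_m . <rho_m/p_m, P[m/y]>\<close>
definition meas_dist :: "op list \<Rightarrow> qubit list \<Rightarrow> var \<Rightarrow> proc \<Rightarrow> qst \<Rightarrow> (qst \<times> proc) pmf" where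
  "meas_dist M qs y P s = embed_pmf (\<lambda>x. \<Sum>m<length M.
      if x = (meas_post M qs s m, subst y (Nv m) P) then meas_prob M qs s m else 0)"

definition qargs :: "qubit list \<Rightarrow> expr list" where
  "qargs qs = map (\<lambda>q. Val (Qb q)) qs"

subsection \<open>Probabilistic labelled semantics of processes on a quantum state\<close>

inductive plts :: "qst \<Rightarrow> proc \<Rightarrow> act \<Rightarrow> (qst \<times> proc) pmf \<Rightarrow> bool" where
  p_tau: "plts s (Tau P) TauA (return_pmf (s, P))"
| p_out: "plts s (Out c (Val v) P) (OutA c v) (return_pmf (s, P))"
| p_inp: "plts s (Inp c x P) (InA c v) (return_pmf (s, subst x v P))"
| p_sop: "\<lbrakk> es = qargs qs; distinct qs; set qs \<subseteq> fst s \<rbrakk>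
          \<Longrightarrow> plts s (SOp Ks es P) TauA (return_pmf ((fst s, apply_sop Ks qs (snd s)), P))"
| p_meas: "\<lbrakk> es = qargs qs; distinct qs; set qs \<subseteq> fst s;
            \<forall>m<length M. meas_prob M qs s m \<ge> 0; (\<Sum>m<length M. meas_prob M qs s m) = 1 \<rbrakk>
          \<Longrightarrow> plts s (Meas M es y P) TauA (meas_dist M qs y P s)"
| p_suml: "plts s P \<alpha> \<Delta> \<Longrightarrow> plts s (Sum P Q) \<alpha> \<Delta>"
| p_sumr: "plts s Q \<alpha> \<Delta> \<Longrightarrow> plts s (Sum P Q) \<alpha> \<Delta>"
| p_parl: "plts s P \<alpha> \<Delta> \<Longrightarrow> plts s (Par P Q) \<alpha> (map_pmf (\<lambda>(s', P'). (s', Par P' Q)) \<Delta>)"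
| p_parr: "plts s Q \<alpha> \<Delta> \<Longrightarrow> plts s (Par P Q) \<alpha> (map_pmf (\<lambda>(s', Q'). (s', Par P Q')) \<Delta>)"
| p_comml: "\<lbrakk> plts s P (OutA c v) (return_pmf (s, P')); plts s Q (InA c v) (return_pmf (s, Q')) \<rbrakk>
          \<Longrightarrow> plts s (Par P Q) TauA (return_pmf (s, Par P' Q'))"
| p_commr: "\<lbrakk> plts s P (InA c v) (return_pmf (s, P')); plts s Q (OutA c v) (return_pmf (s, Q')) \<rbrakk>
          \<Longrightarrow> plts s (Par P Q) TauA (return_pmf (s, Par P' Q'))"
| p_res: "\<lbrakk> plts s P \<alpha> \<Delta>; chan_of \<alpha> \<noteq> Some c \<rbrakk>
          \<Longrightarrow> plts s (Res c P) \<alpha> (map_pmf (\<lambda>(s', P'). (s', Res c P')) \<Delta>)"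
| p_ift: "\<lbrakk> bval b = Some True; plts s P \<alpha> \<Delta> \<rbrakk> \<Longrightarrow> plts s (If b P Q) \<alpha> \<Delta>"
| p_iff: "\<lbrakk> bval b = Some False; plts s Q \<alpha> \<Delta> \<rbrakk> \<Longrightarrow> plts s (If b P Q) \<alpha> \<Delta>"

inductive scong :: "proc \<Rightarrow> proc \<Rightarrow> bool" (infix "\<equiv>\<^sub>s" 50) where
  sc_refl: "P \<equiv>\<^sub>s P"
| sc_sym: "P \<equiv>\<^sub>s Q \<Longrightarrow> Q \<equiv>\<^sub>s P"
| sc_trans: "P \<equiv>\<^sub>s Q \<Longrightarrow> Q \<equiv>\<^sub>s R \<Longrightarrow> P \<equiv>\<^sub>s R"
| sc_out: "P \<equiv>\<^sub>s Q \<Longrightarrow> Out c e P \<equiv>\<^sub>s Out c e Q"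
| sc_inp: "P \<equiv>\<^sub>s Q \<Longrightarrow> Inp c x P \<equiv>\<^sub>s Inp c x Q"
| sc_tau: "P \<equiv>\<^sub>s Q \<Longrightarrow> Tau P \<equiv>\<^sub>s Tau Q"
| sc_sop: "P \<equiv>\<^sub>s Q \<Longrightarrow> SOp K es P \<equiv>\<^sub>s SOp K es Q"
| sc_meas: "P \<equiv>\<^sub>s Q \<Longrightarrow> Meas M es y P \<equiv>\<^sub>s Meas M es y Q"
| sc_sum: "P \<equiv>\<^sub>s P' \<Longrightarrow> Q \<equiv>\<^sub>s Q' \<Longrightarrow> Sum P Q \<equiv>\<^sub>s Sum P' Q'"
| sc_par: "P \<equiv>\<^sub>s P' \<Longrightarrow> Q \<equiv>\<^sub>s Q' \<Longrightarrow> Par P Q \<equiv>\<^sub>s Par P' Q'"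
| sc_res: "P \<equiv>\<^sub>s Q \<Longrightarrow> Res c P \<equiv>\<^sub>s Res c Q"
| sc_if: "P \<equiv>\<^sub>s P' \<Longrightarrow> Q \<equiv>\<^sub>s Q' \<Longrightarrow> If b P Q \<equiv>\<^sub>s If b P' Q'"
| sc_par_nil: "Par P Nil \<equiv>\<^sub>s P"
| sc_par_comm: "Par P Q \<equiv>\<^sub>s Par Q P"
| sc_par_assoc: "Par (Par P Q) R \<equiv>\<^sub>s Par P (Par Q R)"
| sc_sum_nil: "Sum P Nil \<equiv>\<^sub>s P"
| sc_sum_comm: "Sum P Q \<equiv>\<^sub>s Sum Q P"
| sc_sum_assoc: "Sum (Sum P Q) R \<equiv>\<^sub>s Sum P (Sum Q R)"
| sc_res_nil: "Res c Nil \<equiv>\<^sub>s Nil"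
| sc_res_swap: "Res c (Res d P) \<equiv>\<^sub>s Res d (Res c P)"
| sc_res_extr: "c \<notin> fn P \<Longrightarrow> Par P (Res c Q) \<equiv>\<^sub>s Res c (Par P Q)"
| sc_discard_nil: "Discard [] \<equiv>\<^sub>s Nil"
| sc_discard_app: "Discard (xs @ ys) \<equiv>\<^sub>s Par (Discard xs) (Discard ys)"

subsection \<open>Extended configurations and the enhanced semantics\<close>

datatype conf = Conf qst proc proc   \<comment> \<open>\<langle>\<langle>rho, P, R\<rangle>\<rangle>, R an observer\<close>
  | Bot                              \<comment> \<open>the deadlock configuration\<close>

fun confeq :: "conf \<Rightarrow> conf \<Rightarrow> bool" where
  "confeq (Conf s P R) (Conf s' P' R') = (s = s' \<and> P \<equiv>\<^sub>s P' \<and> R = R')"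
| "confeq Bot Bot = True"
| "confeq _ _ = False"

datatype dir = Lft | Rgt
datatype idx = Diamond | Path "dir list"

text \<open>the observer component at path pi performs an action\<close>
inductive ostep :: "dir list \<Rightarrow> qst \<Rightarrow> proc \<Rightarrow> act \<Rightarrow> (qst \<times> proc) pmf \<Rightarrow> bool" where
  o_leaf: "\<lbrakk> \<forall>P Q. R \<noteq> Par P Q; plts s R \<alpha> \<Delta> \<rbrakk> \<Longrightarrow> ostep [] s R \<alpha> \<Delta>"
| o_l: "ostep \<pi> s R1 \<alpha> \<Delta> \<Longrightarrow> ostep (Lft # \<pi>) s (Par R1 R2) \<alpha> (map_pmf (\<lambda>(s', R'). (s', Par R' R2)) \<Delta>)"
| o_r: "ostep \<pi> s R2 \<alpha> \<Delta> \<Longrightarrow> ostep (Rgt # \<pi>) s (Par R1 R2) \<alpha> (map_pmf (\<lambda>(s', R'). (s', Par R1 R')) \<Delta>)"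

inductive esem :: "conf \<Rightarrow> idx \<Rightarrow> conf pmf \<Rightarrow> bool" where
  e_proc: "plts s P TauA \<Delta> \<Longrightarrow> esem (Conf s P R) Diamond (map_pmf (\<lambda>(s', P'). Conf s' P' R) \<Delta>)"
| e_obs: "ostep \<pi> s R TauA \<Delta> \<Longrightarrow> esem (Conf s P R) (Path \<pi>) (map_pmf (\<lambda>(s', R'). Conf s' P R') \<Delta>)"
| e_obs_out: "\<lbrakk> ostep \<pi> s R (OutA c v) (return_pmf (s, R')); plts s P (InA c v) (return_pmf (s, P')) \<rbrakk>
          \<Longrightarrow> esem (Conf s P R) (Path \<pi>) (return_pmf (Conf s P' R'))"
| e_obs_in: "\<lbrakk> ostep \<pi> s R (InA c v) (return_pmf (s, R')); plts s P (OutA c v) (return_pmf (s, P')) \<rbrakk>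
          \<Longrightarrow> esem (Conf s P R) (Path \<pi>) (return_pmf (Conf s P' R'))"
| e_cong: "\<lbrakk> confeq C C'; esem C' \<pi> \<Theta>'; rel_pmf confeq \<Theta>' \<Theta> \<rbrakk> \<Longrightarrow> esem C \<pi> \<Theta>"

text \<open>lifting to distributions by linearity\<close>
definition esem_d :: "idx \<Rightarrow> conf pmf \<Rightarrow> conf pmf \<Rightarrow> bool" where
  "esem_d \<pi> \<Delta> \<Theta> \<longleftrightarrow> (\<exists>\<Phi> :: (conf \<times> conf pmf) pmf.
      map_pmf fst \<Phi> = \<Delta> \<and> (\<forall>(C, \<Theta>') \<in> set_pmf \<Phi>. esem C \<pi> \<Theta>') \<and> \<Theta> = bind_pmf \<Phi> snd)"

text \<open>contexts O[.] = [.] || R'\<close>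
fun ctx :: "proc \<Rightarrow> conf \<Rightarrow> conf" where
  "ctx R' (Conf s P R) = Conf s P (Par R R')"
| "ctx R' Bot = Bot"

definition octx :: "proc \<Rightarrow> conf pmf \<Rightarrow> conf pmf" where
  "octx R' \<Delta> = map_pmf (ctx R') \<Delta>"

subsection \<open>Partial trace of configurations\<close>

definition discards :: "qubit list \<Rightarrow> conf \<Rightarrow> bool" where
  "discards qs C \<longleftrightarrow> C = Bot \<or> (\<exists>s P R P'. C = Conf s P R \<and> P \<equiv>\<^sub>s Par P' (Discard (qargs qs)))"

definition wd_tr :: "qubit list \<Rightarrow> conf pmf \<Rightarrow> bool" where
  "wd_tr qs \<Delta> \<longleftrightarrow> (\<forall>C \<in> set_pmf \<Delta>. discards qs C)"

fun ctr :: "qubit list \<Rightarrow> conf \<Rightarrow> conf" where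
  "ctr qs (Conf s P R) = Conf (ptrace qs s) (SOME P'. P \<equiv>\<^sub>s Par P' (Discard (qargs qs))) R"
| "ctr qs Bot = Bot"

definition ptr :: "qubit list \<Rightarrow> conf pmf \<Rightarrow> conf pmf" where
  "ptr qs \<Delta> = map_pmf (ctr qs) \<Delta>"

fun wf_conf :: "conf \<Rightarrow> bool" where
  "wf_conf (Conf s P R) = (is_obs R \<and> lin P \<and> lin R \<and> qbits P \<inter> qbits R = {}
                           \<and> qbits P \<union> qbits R \<subseteq> fst s)"
| "wf_conf Bot = True"

end

theory Submission
  imports Defs
begin

section \<open>Structural congruence invariants\<close>

lemma scong_sym_iff: "P \<equiv>\<^sub>s Q \<longleftrightarrow> Q \<equiv>\<^sub>s P"
  using sc_sym by blast

fun wq :: "qubit \<Rightarrow> proc \<Rightarrow> nat" where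
  "wq q Nil = 0"
| "wq q (Discard es) = count_list es (Val (Qb q))"
| "wq q (Out c e P) = max (if q \<in> qe e then 1 else 0) (wq q P)"
| "wq q (Inp c x P) = wq q P"
| "wq q (Tau P) = wq q P"
| "wq q (SOp K es P) = max (if q \<in> \<Union> (qe ` set es) then 1 else 0) (wq q P)"
| "wq q (Meas M es y P) = max (if q \<in> \<Union> (qe ` set es) then 1 else 0) (wq q P)"
| "wq q (Sum P Q) = max (wq q P) (wq q Q)"
| "wq q (Par P Q) = wq q P + wq q Q"
| "wq q (Res c P) = wq q P"
| "wq q (If b P Q) = max (wq q P) (wq q Q)"

lemma qe_iff: "q \<in> qe e \<longleftrightarrow> e = Val (Qb q)"
  by (cases e rule: qe.cases) auto

lemma count_list_0_iff: "count_list xs x = 0 \<longleftrightarrow> x \<notin> set xs"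
  by (induction xs) auto

lemma wq_0_iff: "wq q P = 0 \<longleftrightarrow> q \<notin> qbits P"
  by (induction P) (auto simp: count_list_0_iff qe_iff)

lemma distinct_count_le1: "distinct xs \<Longrightarrow> count_list xs x \<le> Suc 0"
  by (induction xs) (auto simp: count_list_0_iff)

lemma lin_wq: "lin P \<Longrightarrow> wq q P \<le> 1"
proof (induction P)
  case (Out c e P)
  then show ?case using wq_0_iff[of q P] by auto
next
  case (Par P1 P2)
  then show ?case using wq_0_iff[of q P1] wq_0_iff[of q P2] by auto
qed (auto simp: distinct_count_le1)

lemma scong_wq: "P \<equiv>\<^sub>s Q \<Longrightarrow> wq q P = wq q Q"
  by (induction rule: scong.induct) simp_all

lemma scong_qbits: "P \<equiv>\<^sub>s Q \<Longrightarrow> qbits P = qbits Q"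
proof (rule set_eqI)
  fix q assume "P \<equiv>\<^sub>s Q"
  then have "wq q P = wq q Q" by (rule scong_wq)
  then show "q \<in> qbits P \<longleftrightarrow> q \<in> qbits Q" using wq_0_iff[of q P] wq_0_iff[of q Q] by simp
qed

lemma subst_fn[simp]: "fn (subst x v P) = fn P"
  by (induction P) auto

fun rmd :: "qubit set \<Rightarrow> proc \<Rightarrow> proc" where
  "rmd S Nil = Nil"
| "rmd S (Discard es) = Discard (filter (\<lambda>e. qe e \<inter> S = {}) es)"
| "rmd S (Out c e P) = Out c e (rmd S P)"
| "rmd S (Inp c x P) = Inp c x (rmd S P)"
| "rmd S (Tau P) = Tau (rmd S P)"
| "rmd S (SOp K es P) = SOp K es (rmd S P)"
| "rmd S (Meas M es y P) = Meas M es y (rmd S P)"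
| "rmd S (Sum P Q) = Sum (rmd S P) (rmd S Q)"
| "rmd S (Par P Q) = Par (rmd S P) (rmd S Q)"
| "rmd S (Res c P) = Res c (rmd S P)"
| "rmd S (If b P Q) = If b (rmd S P) (rmd S Q)"

lemma rmd_fn[simp]: "fn (rmd S P) = fn P"
  by (induction P) auto

lemmas scI = sc_refl sc_out sc_inp sc_tau sc_sop sc_meas sc_sum sc_par sc_res sc_if
  sc_par_nil sc_par_comm sc_par_assoc sc_sum_nil sc_sum_comm sc_sum_assoc sc_res_nil sc_res_swap
  sc_res_extr sc_discard_nil sc_discard_app

lemma scong_rmd: "P \<equiv>\<^sub>s Q \<Longrightarrow> rmd S P \<equiv>\<^sub>s rmd S Q"
proof (induction rule: scong.induct)
  case (sc_sym P Q) then show ?case by (blast intro: scong.sc_sym)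
next
  case (sc_trans P Q R) then show ?case by (blast intro: scong.sc_trans)
qed (simp_all add: scI)

lemma rmd_id: "qbits P \<inter> S = {} \<Longrightarrow> rmd S P = P"
  by (induction P) (auto simp: filter_id_conv)

lemma qbits_Discard_qargs[simp]: "qbits (Discard (qargs qs)) = set qs"
  by (auto simp: qargs_def)

lemma wq_Discard_qargs: "q \<in> set qs \<Longrightarrow> wq q (Discard (qargs qs)) \<ge> 1"
proof -
  assume "q \<in> set qs"
  then have "wq q (Discard (qargs qs)) \<noteq> 0" by (simp only: wq_0_iff qbits_Discard_qargs) simp
  then show ?thesis by linarith
qed

lemma rmd_Discard_qargs: "rmd (set qs) (Discard (qargs qs)) = Discard []"
  by (auto simp: qargs_def filter_empty_conv)

lemma cancel_disj:
  assumes "Par A (Discard (qargs qs)) \<equiv>\<^sub>s Par B (Discard (qargs qs))"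
    and "qbits A \<inter> set qs = {}"
  shows "qbits B \<inter> set qs = {}"
proof -
  { fix q assume q: "q \<in> set qs" "q \<in> qbits B"
    have "wq q (Par A (Discard (qargs qs))) = wq q (Par B (Discard (qargs qs)))"
      using scong_wq[OF assms(1)] .
    then have "wq q A = wq q B" by simp
    moreover have "wq q A = 0" using q assms(2) wq_0_iff by blast
    ultimately have False using q wq_0_iff by auto }
  then show ?thesis by blast
qed

lemma cancel:
  assumes "Par A (Discard (qargs qs)) \<equiv>\<^sub>s Par B (Discard (qargs qs))"
    and "qbits A \<inter> set qs = {}"
  shows "A \<equiv>\<^sub>s B"
proof -
  have B: "qbits B \<inter> set qs = {}" using cancel_disj[OF assms] .
  have "rmd (set qs) (Par A (Discard (qargs qs))) \<equiv>\<^sub>s rmd (set qs) (Par B (Discard (qargs qs)))"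
    using scong_rmd[OF assms(1)] .
  moreover have "rmd (set qs) (Par A (Discard (qargs qs))) = Par A (Discard [])"
    by (simp only: rmd.simps(9) rmd_id[OF assms(2)] rmd_Discard_qargs)
  moreover have "rmd (set qs) (Par B (Discard (qargs qs))) = Par B (Discard [])"
    by (simp only: rmd.simps(9) rmd_id[OF B] rmd_Discard_qargs)
  ultimately have "Par A (Discard []) \<equiv>\<^sub>s Par B (Discard [])" by simp
  have a: "A \<equiv>\<^sub>s Par A (Discard [])"
    by (rule sc_sym, rule sc_trans[OF sc_par[OF sc_refl sc_discard_nil] sc_par_nil])
  have b: "Par B (Discard []) \<equiv>\<^sub>s B"
    by (rule sc_trans[OF sc_par[OF sc_refl sc_discard_nil] sc_par_nil])
  show ?thesis by (rule sc_trans[OF a sc_trans[OF \<open>Par A (Discard []) \<equiv>\<^sub>s Par B (Discard [])\<close> b]])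
qed

lemma lin_disj:
  assumes "P \<equiv>\<^sub>s Par A (Discard (qargs qs))" "lin P"
  shows "qbits A \<inter> set qs = {}"
proof -
  { fix q assume q: "q \<in> set qs" "q \<in> qbits A"
    have "wq q P = wq q A + wq q (Discard (qargs qs))" using scong_wq[OF assms(1)] by simp
    moreover have "wq q A \<ge> 1" using q wq_0_iff by (metis less_one not_less)
    moreover have "wq q (Discard (qargs qs)) \<ge> 1" using q wq_Discard_qargs by blast
    ultimately have False using lin_wq[OF assms(2), of q] by linarith }
  then show ?thesis by blast
qed

section \<open>Partial trace commutes with local operations\<close>

definition pd :: "qubit list \<Rightarrow> dens \<Rightarrow> dens" where
  "pd qs \<rho> = (\<lambda>a b. if (\<forall>q\<in>set qs. \<not> a q \<and> \<not> b q)
     then (\<Sum>c\<in>asg (set qs). \<rho> (ovr (set qs) c a) (ovr (set qs) c b)) else 0)"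

lemma ptrace_pd: "ptrace qs s = (fst s - set qs, pd qs (snd s))"
  by (simp add: ptrace_def pd_def)

lemma loc_ovr: "set xs \<inter> S = {} \<Longrightarrow> loc xs (ovr S c a) = loc xs a"
  by (auto simp: loc_def ovr_def fun_eq_iff dest: nth_mem)

lemma upd_notin: "j \<notin> set xs \<Longrightarrow> upd xs c a j = a j"
  by (simp add: upd_def)

lemma upd_ovr: "set xs \<inter> S = {} \<Longrightarrow> upd xs c (ovr S e a) = ovr S e (upd xs c a)"
  by (auto simp: upd_def ovr_def fun_eq_iff)

lemma pd_apply_op:
  assumes "set xs \<inter> set qs = {}"
  shows "pd qs (apply_op A xs \<rho>) = apply_op A xs (pd qs \<rho>)"
proof (intro ext)
  fix a b
  let ?Q = "set qs"
  show "pd qs (apply_op A xs \<rho>) a b = apply_op A xs (pd qs \<rho>) a b"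
  proof (cases "\<forall>q\<in>set qs. \<not> a q \<and> \<not> b q")
    case True
    have cond: "\<forall>q\<in>set qs. \<not> upd xs c a q \<and> \<not> upd xs d b q" for c d
      using True assms by (metis disjoint_iff upd_notin)
    have "pd qs (apply_op A xs \<rho>) a b =
      (\<Sum>e\<in>asg ?Q. \<Sum>c\<in>asg {..<length xs}. \<Sum>d\<in>asg {..<length xs}.
         A (loc xs a) c * \<rho> (ovr ?Q e (upd xs c a)) (ovr ?Q e (upd xs d b)) * cnj (A (loc xs b) d))"
      using True assms by (simp add: pd_def apply_op_def loc_ovr upd_ovr)
    also have "\<dots> = (\<Sum>c\<in>asg {..<length xs}. \<Sum>d\<in>asg {..<length xs}. \<Sum>e\<in>asg ?Q.
         A (loc xs a) c * \<rho> (ovr ?Q e (upd xs c a)) (ovr ?Q e (upd xs d b)) * cnj (A (loc xs b) d))"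
      by (subst sum.swap) (simp add: sum.swap[where A = "asg ?Q"])
    also have "\<dots> = apply_op A xs (pd qs \<rho>) a b"
      by (simp add: apply_op_def pd_def cond sum_distrib_left sum_distrib_right)
    finally show ?thesis .
  next
    case False
    have cond: "(\<forall>q\<in>set qs. \<not> upd xs c a q \<and> \<not> upd xs d b q) = False" for c d
      using False assms by (metis disjoint_iff upd_notin)
    have "pd qs (apply_op A xs \<rho>) a b = 0" using False unfolding pd_def by meson
    moreover have "apply_op A xs (pd qs \<rho>) a b = 0"
      unfolding apply_op_def pd_def by (intro sum.neutral ballI) (simp only: cond if_False mult_zero_left mult_zero_right)
    ultimately show ?thesis by simp
  qed
qed

lemma pd_add: "pd qs (\<lambda>a b. f a b + g a b) = (\<lambda>a b. pd qs f a b + pd qs g a b)"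
  by (auto simp: pd_def fun_eq_iff sum.distrib)

lemma pd_zero: "pd qs (\<lambda>a b. 0) = (\<lambda>a b. 0)"
  by (auto simp: pd_def fun_eq_iff)

lemma pd_div: "pd qs (\<lambda>a b. f a b / z) = (\<lambda>a b. pd qs f a b / z)"
  by (auto simp: pd_def fun_eq_iff sum_divide_distrib)

lemma pd_apply_sop:
  assumes "set xs \<inter> set qs = {}"
  shows "pd qs (apply_sop Ks xs \<rho>) = apply_sop Ks xs (pd qs \<rho>)"
proof (induction Ks)
  case Nil
  then show ?case by (simp add: apply_sop_def pd_zero)
next
  case (Cons K Ks)
  have "pd qs (apply_sop (K # Ks) xs \<rho>) = pd qs (\<lambda>a b. apply_op K xs \<rho> a b + apply_sop Ks xs \<rho> a b)"
    by (simp add: apply_sop_def)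
  also have "\<dots> = (\<lambda>a b. apply_op K xs (pd qs \<rho>) a b + apply_sop Ks xs (pd qs \<rho>) a b)"
    by (simp only: pd_add Cons pd_apply_op[OF assms])
  also have "\<dots> = apply_sop (K # Ks) xs (pd qs \<rho>)"
    by (simp add: apply_sop_def)
  finally show ?case .
qed

lemma asg_image: "asg S = (\<lambda>T i. i \<in> T) ` Pow S"
proof
  show "asg S \<subseteq> (\<lambda>T i. i \<in> T) ` Pow S"
  proof
    fix c assume "c \<in> asg S"
    then have "c = (\<lambda>i. i \<in> {j. c j})" "{j. c j} \<in> Pow S" by (auto simp: asg_def)
    then show "c \<in> (\<lambda>T i. i \<in> T) ` Pow S" by blast
  qed
qed (auto simp: asg_def)

lemma finite_asg: "finite S \<Longrightarrow> finite (asg S)"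
  by (simp add: asg_image)

lemma infinite_asg: "infinite S \<Longrightarrow> infinite (asg S)"
proof
  assume "infinite S" "finite (asg S)"
  have "(\<lambda>i j. j = i) ` S \<subseteq> asg S" by (auto simp: asg_def)
  moreover have "inj_on (\<lambda>i j. j = i) S" by (auto simp: inj_on_def fun_eq_iff)
  ultimately show False using \<open>infinite S\<close> \<open>finite (asg S)\<close>
    by (meson finite_imageD finite_subset)
qed

lemma qtrace_ptrace:
  assumes "set qs \<subseteq> F"
  shows "qtrace (F - set qs, pd qs Y) = qtrace (F, Y)"
proof -
  let ?Q = "set qs"
  have "qtrace (F - ?Q, pd qs Y) = (\<Sum>a\<in>asg (F - ?Q). \<Sum>e\<in>asg ?Q. Y (ovr ?Q e a) (ovr ?Q e a))"
    unfolding qtrace_def pd_def by (intro sum.cong) (auto simp: asg_def)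
  also have "\<dots> = qtrace (F, Y)"
  proof (cases "finite F")
    case True
    have "(\<Sum>a\<in>asg (F - ?Q). \<Sum>e\<in>asg ?Q. Y (ovr ?Q e a) (ovr ?Q e a))
        = (\<Sum>p\<in>asg (F - ?Q) \<times> asg ?Q. Y (ovr ?Q (snd p) (fst p)) (ovr ?Q (snd p) (fst p)))"
      by (subst sum.cartesian_product) (simp add: case_prod_beta)
    also have "\<dots> = (\<Sum>x\<in>(\<lambda>p. ovr ?Q (snd p) (fst p)) ` (asg (F - ?Q) \<times> asg ?Q). Y x x)"
    proof (rule sum.reindex[symmetric, unfolded comp_def])
      show "inj_on (\<lambda>p. ovr ?Q (snd p) (fst p)) (asg (F - ?Q) \<times> asg ?Q)"
      proof (rule inj_onI)
        fix x y
        assume hx: "x \<in> asg (F - ?Q) \<times> asg ?Q" and hy: "y \<in> asg (F - ?Q) \<times> asg ?Q"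
          and hxy: "ovr ?Q (snd x) (fst x) = ovr ?Q (snd y) (fst y)"
        obtain a e where x: "x = (a, e)" by (cases x)
        obtain a' e' where y: "y = (a', e')" by (cases y)
        have h: "a \<in> asg (F - ?Q)" "e \<in> asg ?Q" "a' \<in> asg (F - ?Q)" "e' \<in> asg ?Q"
          "ovr ?Q e a = ovr ?Q e' a'" using hx hy hxy x y by auto
        have "a = a'"
        proof
          fix j
          have E: "(if j \<in> ?Q then e j else a j) = (if j \<in> ?Q then e' j else a' j)"
            using fun_cong[OF h(5), of j] by (simp add: ovr_def)
          show "a j = a' j"
            using h(1-4) E by (cases "j \<in> ?Q") (auto simp: asg_def)
        qed
        moreover have "e = e'"
        proof
          fix j
          have E: "(if j \<in> ?Q then e j else a j) = (if j \<in> ?Q then e' j else a' j)"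
            using fun_cong[OF h(5), of j] by (simp add: ovr_def)
          show "e j = e' j"
            using h(1-4) E by (cases "j \<in> ?Q") (auto simp: asg_def)
        qed
        ultimately show "x = y" using x y by simp
      qed
    qed
    also have "(\<lambda>p. ovr ?Q (snd p) (fst p)) ` (asg (F - ?Q) \<times> asg ?Q) = asg F"
    proof
      show "(\<lambda>p. ovr ?Q (snd p) (fst p)) ` (asg (F - ?Q) \<times> asg ?Q) \<subseteq> asg F"
        using assms by (auto simp: asg_def ovr_def)
      show "asg F \<subseteq> (\<lambda>p. ovr ?Q (snd p) (fst p)) ` (asg (F - ?Q) \<times> asg ?Q)"
      proof
        fix x assume x: "x \<in> asg F"
        let ?a = "\<lambda>j. x j \<and> j \<notin> ?Q" and ?e = "\<lambda>j. x j \<and> j \<in> ?Q"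
        have "x = ovr ?Q ?e ?a" by (auto simp: ovr_def)
        moreover have "(?a, ?e) \<in> asg (F - ?Q) \<times> asg ?Q" using x by (auto simp: asg_def)
        ultimately show "x \<in> (\<lambda>p. ovr ?Q (snd p) (fst p)) ` (asg (F - ?Q) \<times> asg ?Q)"
          by (metis (no_types, lifting) fst_conv image_eqI snd_conv)
      qed
    qed
    finally show ?thesis by (simp add: qtrace_def)
  next
    case False
    then have "infinite (F - ?Q)" by simp
    then show ?thesis using False by (simp add: qtrace_def infinite_asg)
  qed
  finally show ?thesis .
qed

lemma meas_prob_ptrace:
  assumes "set xs \<inter> set qs = {}" "set qs \<subseteq> fst s"
  shows "meas_prob M xs (ptrace qs s) m = meas_prob M xs s m"
proof -
  have "meas_prob M xs (ptrace qs s) m = Re (qtrace (fst s - set qs, pd qs (apply_op (M ! m) xs (snd s))))"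
    by (simp add: meas_prob_def ptrace_pd pd_apply_op[OF assms(1)])
  also have "\<dots> = meas_prob M xs s m"
    by (simp add: qtrace_ptrace[OF assms(2)] meas_prob_def)
  finally show ?thesis .
qed

lemma meas_post_ptrace:
  assumes "set xs \<inter> set qs = {}" "set qs \<subseteq> fst s"
  shows "meas_post M xs (ptrace qs s) m = ptrace qs (meas_post M xs s m)"
proof -
  have "meas_prob M xs (fst s - set qs, pd qs (snd s)) m = meas_prob M xs s m"
    using meas_prob_ptrace[OF assms] by (simp add: ptrace_pd)
  then show ?thesis using assms by (simp add: meas_post_def ptrace_pd pd_div pd_apply_op)
qed

lemma sop_ptrace:
  assumes "set xs \<inter> set qs = {}"
  shows "(fst (ptrace qs s), apply_sop Ks xs (snd (ptrace qs s))) = ptrace qs (fst s, apply_sop Ks xs (snd s))"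
  using assms by (simp add: ptrace_pd pd_apply_sop)

section \<open>Properties of the labelled semantics\<close>

definition mu :: "op list \<Rightarrow> qubit list \<Rightarrow> qst \<Rightarrow> nat pmf" where
  "mu M xs s = embed_pmf (\<lambda>m. if m < length M then meas_prob M xs s m else 0)"

lemma pmf_mu:
  assumes "\<forall>m<length M. meas_prob M xs s m \<ge> 0" "(\<Sum>m<length M. meas_prob M xs s m) = 1"
  shows "pmf (mu M xs s) m = (if m < length M then meas_prob M xs s m else 0)"
  unfolding mu_def
proof (rule pmf_embed_pmf)
  show "0 \<le> (if x < length M then meas_prob M xs s x else 0)" for x using assms by auto
  have "(\<integral>\<^sup>+ x. ennreal (if x < length M then meas_prob M xs s x else 0) \<partial>count_space UNIV)
      = (\<Sum>x<length M. ennreal (if x < length M then meas_prob M xs s x else 0))"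
    by (rule nn_integral_count_space') auto
  also have "\<dots> = (\<Sum>x<length M. ennreal (meas_prob M xs s x))"
    by simp
  also have "\<dots> = ennreal (\<Sum>x<length M. meas_prob M xs s x)"
    using assms by (subst sum_ennreal) auto
  also have "\<dots> = 1" using assms by simp
  finally show "(\<integral>\<^sup>+ x. ennreal (if x < length M then meas_prob M xs s x else 0) \<partial>count_space UNIV) = 1" .
qed

lemma set_mu:
  assumes "\<forall>m<length M. meas_prob M xs s m \<ge> 0" "(\<Sum>m<length M. meas_prob M xs s m) = 1"
  shows "set_pmf (mu M xs s) \<subseteq> {..<length M}"
  using pmf_mu[OF assms] by (auto simp: set_pmf_eq)

lemma meas_dist_map:
  assumes "\<forall>m<length M. meas_prob M xs s m \<ge> 0" "(\<Sum>m<length M. meas_prob M xs s m) = 1"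
  shows "meas_dist M xs y P s = map_pmf (\<lambda>m. (meas_post M xs s m, subst y (Nv m) P)) (mu M xs s)"
proof -
  let ?g = "\<lambda>m. (meas_post M xs s m, subst y (Nv m) P)"
  let ?\<nu> = "map_pmf ?g (mu M xs s)"
  have "(\<lambda>x. \<Sum>m<length M. if x = ?g m then meas_prob M xs s m else 0) = pmf ?\<nu>"
  proof
    fix x
    have "pmf ?\<nu> x = measure_pmf.prob (mu M xs s) (?g -` {x})" by (simp add: pmf_map)
    also have "\<dots> = measure_pmf.prob (mu M xs s) (?g -` {x} \<inter> set_pmf (mu M xs s))"
      by (simp add: measure_Int_set_pmf)
    also have "\<dots> = measure_pmf.prob (mu M xs s) ({m \<in> {..<length M}. ?g m = x} \<inter> set_pmf (mu M xs s))"
      using set_mu[OF assms] by (intro arg_cong[where f = "measure_pmf.prob _"]) auto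
    also have "\<dots> = measure_pmf.prob (mu M xs s) {m \<in> {..<length M}. ?g m = x}"
      by (simp add: measure_Int_set_pmf)
    also have "\<dots> = (\<Sum>m\<in>{m \<in> {..<length M}. ?g m = x}. pmf (mu M xs s) m)"
      by (simp add: measure_measure_pmf_finite)
    also have "\<dots> = (\<Sum>m<length M. if x = ?g m then meas_prob M xs s m else 0)"
      by (simp add: sum.inter_filter[symmetric] pmf_mu[OF assms] eq_commute)
    finally show "(\<Sum>m<length M. if x = ?g m then meas_prob M xs s m else 0) = pmf ?\<nu> x" by simp
  qed
  then show ?thesis
    unfolding meas_dist_def using type_definition.Rep_inverse[OF td_pmf_embed_pmf] by metis
qed

lemma mu_ptrace:
  assumes "set xs \<inter> set qs = {}" "set qs \<subseteq> fst s"
  shows "mu M xs (ptrace qs s) = mu M xs s"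
  unfolding mu_def meas_prob_ptrace[OF assms] ..

inductive_cases plts_Nil: "plts s Nil \<alpha> \<Delta>"
inductive_cases plts_Discard: "plts s (Discard es) \<alpha> \<Delta>"
inductive_cases plts_Out: "plts s (Out c e P) \<alpha> \<Delta>"
inductive_cases plts_Inp: "plts s (Inp c x P) \<alpha> \<Delta>"
inductive_cases plts_Tau: "plts s (Tau P) \<alpha> \<Delta>"
inductive_cases plts_SOp: "plts s (SOp K es P) \<alpha> \<Delta>"
inductive_cases plts_Meas: "plts s (Meas M es y P) \<alpha> \<Delta>"
inductive_cases plts_Sum: "plts s (Sum P Q) \<alpha> \<Delta>"
inductive_cases plts_Par: "plts s (Par P Q) \<alpha> \<Delta>"
inductive_cases plts_Res: "plts s (Res c P) \<alpha> \<Delta>"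
inductive_cases plts_If: "plts s (If b P Q) \<alpha> \<Delta>"

lemma no_plts_Nil[simp]: "\<not> plts s Nil \<alpha> \<Delta>"
  by (auto elim: plts_Nil)

lemma no_plts_Discard[simp]: "\<not> plts s (Discard es) \<alpha> \<Delta>"
  by (auto elim: plts_Discard)

lemma plts_vis:
  "plts s P \<alpha> \<Delta> \<Longrightarrow> \<alpha> \<noteq> TauA \<Longrightarrow>
     \<exists>P'. \<Delta> = return_pmf (s, P') \<and> (\<forall>s'. plts s' P \<alpha> (return_pmf (s', P')))"
proof (induction rule: plts.induct)
  case (p_out s c v P)
  then show ?case by (auto intro: plts.intros)
next
  case (p_inp s c x P v)
  then show ?case by (auto intro: plts.intros)
next
  case (p_suml s P \<alpha> \<Delta> Q)
  then show ?case by (auto intro: plts.intros)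
next
  case (p_sumr s Q \<alpha> \<Delta> P)
  then show ?case by (auto intro: plts.intros)
next
  case (p_parl s P \<alpha> \<Delta> Q)
  then obtain P' where "\<Delta> = return_pmf (s, P')" "\<forall>s'. plts s' P \<alpha> (return_pmf (s', P'))" by blast
  then show ?case using plts.p_parl[of _ P \<alpha> _ Q] by fastforce
next
  case (p_parr s Q \<alpha> \<Delta> P)
  then obtain Q' where "\<Delta> = return_pmf (s, Q')" "\<forall>s'. plts s' Q \<alpha> (return_pmf (s', Q'))" by blast
  then show ?case using plts.p_parr[of _ Q \<alpha> _ P] by fastforce
next
  case (p_res s P \<alpha> \<Delta> c)
  then obtain P' where "\<Delta> = return_pmf (s, P')" "\<forall>s'. plts s' P \<alpha> (return_pmf (s', P'))" by blast
  then show ?case using plts.p_res[of _ P \<alpha> _ c] p_res.hyps(2) by fastforce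
next
  case (p_ift b s P \<alpha> \<Delta> Q)
  then show ?case by (auto intro: plts.intros)
next
  case (p_iff b s Q \<alpha> \<Delta> P)
  then show ?case by (auto intro: plts.intros)
qed auto

fun vq :: "val \<Rightarrow> qubit set" where
  "vq (Qb q) = {q}"
| "vq (Nv n) = {}"

fun actq :: "act \<Rightarrow> qubit set" where
  "actq (InA c v) = vq v"
| "actq _ = {}"

lemma qe_Val[simp]: "qe (Val v) = vq v"
  by (cases v) auto

lemma qe_esubst: "qe (esubst x v e) \<subseteq> qe e \<union> vq v"
  by (cases e) auto

lemma qes_esubst: "\<Union> (qe ` set (map (esubst x v) es)) \<subseteq> \<Union> (qe ` set es) \<union> vq v"
  using qe_esubst[of x v] by fastforce

lemma qbits_subst: "qbits (subst x v P) \<subseteq> qbits P \<union> vq v"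
proof (induction P)
  case (Discard es)
  then show ?case using qes_esubst[of x v es] by simp
next
  case (Out c e P)
  then show ?case using qe_esubst[of x v e] by auto
next
  case (SOp K es P)
  then show ?case using qes_esubst[of x v es] by auto
next
  case (Meas M es y P)
  then show ?case using qes_esubst[of x v es] by auto
qed auto

lemma qbits_subst_Nv[simp]: "qbits (subst x (Nv n) P) \<subseteq> qbits P"
  using qbits_subst[of x "Nv n" P] by simp

lemma set_meas_dist:
  assumes "\<forall>m<length M. meas_prob M xs s m \<ge> 0" "(\<Sum>m<length M. meas_prob M xs s m) = 1"
  shows "set_pmf (meas_dist M xs y P s) \<subseteq> range (\<lambda>m. (meas_post M xs s m, subst y (Nv m) P))"
  by (auto simp: meas_dist_map[OF assms])

lemma plts_out_val: "plts s P \<alpha> \<Delta> \<Longrightarrow> \<alpha> = OutA c v \<Longrightarrow> vq v \<subseteq> qbits P"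
  by (induction arbitrary: c v rule: plts.induct) auto

lemma plts_chan: "plts s P \<alpha> \<Delta> \<Longrightarrow> chan_of \<alpha> = Some c \<Longrightarrow> c \<in> fn P"
  by (induction rule: plts.induct) auto

lemma plts_deriv:
  "plts s P \<alpha> \<Delta> \<Longrightarrow> x \<in> set_pmf \<Delta> \<Longrightarrow>
     fn (snd x) \<subseteq> fn P \<and> qbits (snd x) \<subseteq> qbits P \<union> actq \<alpha>"
proof (induction arbitrary: x rule: plts.induct)
  case (p_tau s P)
  then show ?case by simp
next
  case (p_out s c v P)
  then show ?case by auto
next
  case (p_inp s c y P v)
  then show ?case using qbits_subst[of y v P] by auto
next
  case (p_sop es qs s Ks P)
  then show ?case by auto
next
  case (p_meas es qs s M y P)
  then obtain m where xm: "x = (meas_post M qs s m, subst y (Nv m) P)"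
    using set_meas_dist[OF p_meas.hyps(4,5), of y P] by blast
  have a: "qbits (snd x) \<subseteq> qbits P" using xm by simp
  have b: "qbits P \<subseteq> qbits (Meas M es y P)" by auto
  have c: "fn (snd x) \<subseteq> fn (Meas M es y P)" using xm by simp
  from a b c show ?case by blast
next
  case (p_suml s P \<alpha> \<Delta> Q)
  from p_suml.IH[OF p_suml.prems] show ?case by auto
next
  case (p_sumr s Q \<alpha> \<Delta> P)
  from p_sumr.IH[OF p_sumr.prems] show ?case by auto
next
  case (p_parl s P \<alpha> \<Delta> Q)
  then obtain y where y: "y \<in> set_pmf \<Delta>" "x = (fst y, Par (snd y) Q)" by (auto simp: case_prod_beta)
  from p_parl.IH[OF y(1)] y(2) show ?case by auto
next
  case (p_parr s Q \<alpha> \<Delta> P)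
  then obtain y where y: "y \<in> set_pmf \<Delta>" "x = (fst y, Par P (snd y))" by (auto simp: case_prod_beta)
  from p_parr.IH[OF y(1)] y(2) show ?case by auto
next
  case (p_comml s P c v P' Q Q')
  have x: "x = (s, Par P' Q')" using p_comml.prems by simp
  have "vq v \<subseteq> qbits P" using plts_out_val[OF p_comml.hyps(1)] by simp
  with p_comml.IH(1)[of "(s, P')"] p_comml.IH(2)[of "(s, Q')"] x show ?case by auto
next
  case (p_commr s P c v P' Q Q')
  have x: "x = (s, Par P' Q')" using p_commr.prems by simp
  have "vq v \<subseteq> qbits Q" using plts_out_val[OF p_commr.hyps(2)] by simp
  with p_commr.IH(1)[of "(s, P')"] p_commr.IH(2)[of "(s, Q')"] x show ?case by auto
next
  case (p_res s P \<alpha> \<Delta> c)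
  then obtain y where y: "y \<in> set_pmf \<Delta>" "x = (fst y, Res c (snd y))" by (auto simp: case_prod_beta)
  from p_res.IH[OF y(1)] y(2) show ?case by auto
next
  case (p_ift b s P \<alpha> \<Delta> Q)
  from p_ift.IH[OF p_ift.prems] show ?case by auto
next
  case (p_iff b s Q \<alpha> \<Delta> P)
  from p_iff.IH[OF p_iff.prems] show ?case by auto
qed

lemma qbits_qargs[simp]: "\<Union> (qe ` set (qargs xs)) = set xs"
  by (auto simp: qargs_def)

lemma map_apfst_comm:
  "map_pmf (apfst h) (map_pmf (\<lambda>(s', P'). (s', g P')) \<Delta>) = map_pmf (\<lambda>(s', P'). (s', g P')) (map_pmf (apfst h) \<Delta>)"
  by (simp add: pmf.map_comp comp_def case_prod_beta)

lemma fst_ptrace[simp]: "fst (ptrace qs s) = fst s - set qs"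
  by (simp add: ptrace_def)

lemma sop_ptrace':
  assumes "set xs \<inter> set qs = {}"
  shows "(fst s - set qs, apply_sop Ks xs (snd (ptrace qs s))) = ptrace qs (fst s, apply_sop Ks xs (snd s))"
  using sop_ptrace[OF assms] by simp

lemma plts_ptrace_fw:
  "plts s A \<alpha> \<Delta> \<Longrightarrow> qbits A \<inter> set qs = {} \<Longrightarrow> set qs \<subseteq> fst s \<Longrightarrow>
     plts (ptrace qs s) A \<alpha> (map_pmf (apfst (ptrace qs)) \<Delta>)"
proof (induction rule: plts.induct)
  case (p_tau s P)
  then show ?case using plts.p_tau by simp
next
  case (p_out s c v P)
  then show ?case using plts.p_out by simp
next
  case (p_inp s c x P v)
  then show ?case using plts.p_inp by simp
next
  case (p_sop es xs s Ks P)
  have d: "set xs \<inter> set qs = {}" using p_sop by auto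
  have "plts (ptrace qs s) (SOp Ks es P) TauA
          (return_pmf ((fst (ptrace qs s), apply_sop Ks xs (snd (ptrace qs s))), P))"
    using p_sop d by (intro plts.p_sop) auto
  then show ?case by (simp add: sop_ptrace'[OF d])
next
  case (p_meas es xs s M y P)
  have d: "set xs \<inter> set qs = {}" using p_meas by auto
  note mp = meas_prob_ptrace[OF d p_meas.prems(2)]
  have h4: "\<forall>m<length M. meas_prob M xs (ptrace qs s) m \<ge> 0" and h5: "(\<Sum>m<length M. meas_prob M xs (ptrace qs s) m) = 1"
    using p_meas.hyps by (simp_all add: mp)
  have "plts (ptrace qs s) (Meas M es y P) TauA (meas_dist M xs y P (ptrace qs s))"
    using p_meas d h4 h5 by (intro plts.p_meas) auto
  moreover have "meas_dist M xs y P (ptrace qs s) = map_pmf (apfst (ptrace qs)) (meas_dist M xs y P s)"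
    unfolding meas_dist_map[OF h4 h5] meas_dist_map[OF p_meas.hyps(4,5)]
    by (simp add: pmf.map_comp comp_def mu_ptrace[OF d p_meas.prems(2)] meas_post_ptrace[OF d p_meas.prems(2)])
  ultimately show ?case by simp
next
  case (p_suml s P \<alpha> \<Delta> Q)
  then show ?case by (auto intro: plts.p_suml)
next
  case (p_sumr s Q \<alpha> \<Delta> P)
  then show ?case by (auto intro: plts.p_sumr)
next
  case (p_parl s P \<alpha> \<Delta> Q)
  then show ?case by (auto simp: map_apfst_comm intro: plts.p_parl)
next
  case (p_parr s Q \<alpha> \<Delta> P)
  then show ?case by (auto simp: map_apfst_comm intro: plts.p_parr)
next
  case (p_comml s P c v P' Q Q')
  then show ?case using plts.p_comml[of "ptrace qs s" P c v P' Q Q'] by auto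
next
  case (p_commr s P c v P' Q Q')
  then show ?case using plts.p_commr[of "ptrace qs s" P c v P' Q Q'] by auto
next
  case (p_res s P \<alpha> \<Delta> c)
  then show ?case by (auto simp: map_apfst_comm intro: plts.p_res)
next
  case (p_ift b s P \<alpha> \<Delta> Q)
  then show ?case by (auto intro: plts.p_ift)
next
  case (p_iff b s Q \<alpha> \<Delta> P)
  then show ?case by (auto intro: plts.p_iff)
qed

lemma vis_lift:
  assumes "plts s P \<alpha> \<Delta>" "\<alpha> \<noteq> TauA" "return_pmf (ptrace qs s, P') = map_pmf (apfst (ptrace qs)) \<Delta>"
  shows "plts s P \<alpha> (return_pmf (s, P'))"
proof -
  obtain P'' where "\<Delta> = return_pmf (s, P'')" "plts s P \<alpha> (return_pmf (s, P''))"
    using plts_vis[OF assms(1,2)] by blast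
  with assms(3) show ?thesis by simp
qed

lemma plts_ptrace_bw:
  "plts t A \<alpha> \<Delta>' \<Longrightarrow> t = ptrace qs s \<Longrightarrow> set qs \<subseteq> fst s \<Longrightarrow>
     \<exists>\<Delta>. plts s A \<alpha> \<Delta> \<and> \<Delta>' = map_pmf (apfst (ptrace qs)) \<Delta>"
proof (induction arbitrary: s rule: plts.induct)
  case (p_tau t P)
  then show ?case using plts.p_tau by fastforce
next
  case (p_out t c v P)
  then show ?case using plts.p_out by fastforce
next
  case (p_inp t c x P v)
  then show ?case using plts.p_inp by fastforce
next
  case (p_sop es xs t Ks P)
  have d: "set xs \<inter> set qs = {}" using p_sop by auto
  have "plts s (SOp Ks es P) TauA (return_pmf ((fst s, apply_sop Ks xs (snd s)), P))"
    using p_sop by (intro plts.p_sop) auto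
  then show ?case using p_sop.prems by (auto simp: sop_ptrace'[OF d])
next
  case (p_meas es xs t M y P)
  have d: "set xs \<inter> set qs = {}" using p_meas by auto
  note mp = meas_prob_ptrace[OF d p_meas.prems(2)]
  have h4: "\<forall>m<length M. meas_prob M xs s m \<ge> 0" and h5: "(\<Sum>m<length M. meas_prob M xs s m) = 1"
    using p_meas by (simp_all add: mp)
  have "plts s (Meas M es y P) TauA (meas_dist M xs y P s)"
    using p_meas h4 h5 by (intro plts.p_meas) auto
  moreover have "meas_dist M xs y P (ptrace qs s) = map_pmf (apfst (ptrace qs)) (meas_dist M xs y P s)"
    unfolding meas_dist_map[OF h4 h5] meas_dist_map[OF p_meas.hyps(4,5)[unfolded p_meas.prems(1)]]
    by (simp add: pmf.map_comp comp_def mu_ptrace[OF d p_meas.prems(2)] meas_post_ptrace[OF d p_meas.prems(2)])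
  ultimately show ?case using p_meas.prems by blast
next
  case (p_suml t P \<alpha> \<Delta> Q)
  then show ?case using p_suml.IH[OF p_suml.prems] by (blast intro: plts.p_suml)
next
  case (p_sumr t Q \<alpha> \<Delta> P)
  then show ?case using p_sumr.IH[OF p_sumr.prems] by (blast intro: plts.p_sumr)
next
  case (p_parl t P \<alpha> \<Delta> Q)
  then obtain \<Delta>0 where "plts s P \<alpha> \<Delta>0" "\<Delta> = map_pmf (apfst (ptrace qs)) \<Delta>0" using p_parl.IH[OF p_parl.prems] by blast
  then show ?case by (auto simp: map_apfst_comm intro: plts.p_parl)
next
  case (p_parr t Q \<alpha> \<Delta> P)
  then obtain \<Delta>0 where "plts s Q \<alpha> \<Delta>0" "\<Delta> = map_pmf (apfst (ptrace qs)) \<Delta>0" using p_parr.IH[OF p_parr.prems] by blast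
  then show ?case by (auto simp: map_apfst_comm intro: plts.p_parr)
next
  case (p_comml t P c v P' Q Q')
  obtain \<Delta>1 where 1: "plts s P (OutA c v) \<Delta>1" "return_pmf (t, P') = map_pmf (apfst (ptrace qs)) \<Delta>1"
    using p_comml.IH(1)[OF p_comml.prems] by blast
  obtain \<Delta>2 where 2: "plts s Q (InA c v) \<Delta>2" "return_pmf (t, Q') = map_pmf (apfst (ptrace qs)) \<Delta>2"
    using p_comml.IH(2)[OF p_comml.prems] by blast
  have "plts s (Par P Q) TauA (return_pmf (s, Par P' Q'))"
    using 1 2 p_comml.prems by (intro plts.p_comml vis_lift) auto
  then show ?case using p_comml.prems by fastforce
next
  case (p_commr t P c v P' Q Q')
  obtain \<Delta>1 where 1: "plts s P (InA c v) \<Delta>1" "return_pmf (t, P') = map_pmf (apfst (ptrace qs)) \<Delta>1"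
    using p_commr.IH(1)[OF p_commr.prems] by blast
  obtain \<Delta>2 where 2: "plts s Q (OutA c v) \<Delta>2" "return_pmf (t, Q') = map_pmf (apfst (ptrace qs)) \<Delta>2"
    using p_commr.IH(2)[OF p_commr.prems] by blast
  have "plts s (Par P Q) TauA (return_pmf (s, Par P' Q'))"
    using 1 2 p_commr.prems by (intro plts.p_commr vis_lift) auto
  then show ?case using p_commr.prems by fastforce
next
  case (p_res t P \<alpha> \<Delta> c)
  then obtain \<Delta>0 where "plts s P \<alpha> \<Delta>0" "\<Delta> = map_pmf (apfst (ptrace qs)) \<Delta>0" using p_res.IH[OF p_res.prems] by blast
  then show ?case using p_res by (auto simp: map_apfst_comm intro: plts.p_res)
next
  case (p_ift b t P \<alpha> \<Delta> Q)
  then show ?case using p_ift.IH[OF p_ift.prems] by (blast intro: plts.p_ift)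
next
  case (p_iff b t Q \<alpha> \<Delta> P)
  then show ?case using p_iff.IH[OF p_iff.prems] by (blast intro: plts.p_iff)
qed

inductive_cases ostep_Par: "ostep \<pi> s (Par R1 R2) \<alpha> \<Delta>"

lemma ostep_ptrace_fw:
  "ostep \<pi> s R \<alpha> \<Delta> \<Longrightarrow> qbits R \<inter> set qs = {} \<Longrightarrow> set qs \<subseteq> fst s \<Longrightarrow>
     ostep \<pi> (ptrace qs s) R \<alpha> (map_pmf (apfst (ptrace qs)) \<Delta>)"
proof (induction rule: ostep.induct)
  case (o_leaf R s \<alpha> \<Delta>)
  then show ?case using plts_ptrace_fw by (blast intro: ostep.o_leaf)
next
  case (o_l \<pi> s R1 \<alpha> \<Delta> R2)
  then show ?case using ostep.o_l[of \<pi> "ptrace qs s" R1 \<alpha> "map_pmf (apfst (ptrace qs)) \<Delta>" R2]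
    by (simp add: map_apfst_comm Int_Un_distrib2)
next
  case (o_r \<pi> s R2 \<alpha> \<Delta> R1)
  then show ?case using ostep.o_r[of \<pi> "ptrace qs s" R2 \<alpha> "map_pmf (apfst (ptrace qs)) \<Delta>" R1]
    by (simp add: map_apfst_comm Int_Un_distrib2)
qed

lemma ostep_ptrace_bw:
  "ostep \<pi> t R \<alpha> \<Delta>' \<Longrightarrow> t = ptrace qs s \<Longrightarrow> set qs \<subseteq> fst s \<Longrightarrow>
     \<exists>\<Delta>. ostep \<pi> s R \<alpha> \<Delta> \<and> \<Delta>' = map_pmf (apfst (ptrace qs)) \<Delta>"
proof (induction arbitrary: s rule: ostep.induct)
  case (o_leaf R t \<alpha> \<Delta>)
  then obtain \<Delta>0 where "plts s R \<alpha> \<Delta>0" "\<Delta> = map_pmf (apfst (ptrace qs)) \<Delta>0"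
    using plts_ptrace_bw by blast
  then show ?case using o_leaf.hyps(1) by (blast intro: ostep.o_leaf)
next
  case (o_l \<pi> t R1 \<alpha> \<Delta> R2)
  then obtain \<Delta>0 where "ostep \<pi> s R1 \<alpha> \<Delta>0" "\<Delta> = map_pmf (apfst (ptrace qs)) \<Delta>0"
    using o_l.IH[OF o_l.prems] by blast
  then show ?case by (auto simp: map_apfst_comm intro: ostep.o_l)
next
  case (o_r \<pi> t R2 \<alpha> \<Delta> R1)
  then obtain \<Delta>0 where "ostep \<pi> s R2 \<alpha> \<Delta>0" "\<Delta> = map_pmf (apfst (ptrace qs)) \<Delta>0"
    using o_r.IH[OF o_r.prems] by blast
  then show ?case by (auto simp: map_apfst_comm intro: ostep.o_r)
qed

lemma ostep_vis:
  "ostep \<pi> s R \<alpha> \<Delta> \<Longrightarrow> \<alpha> \<noteq> TauA \<Longrightarrow>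
     \<exists>R'. \<Delta> = return_pmf (s, R') \<and> (\<forall>s'. ostep \<pi> s' R \<alpha> (return_pmf (s', R')))"
proof (induction rule: ostep.induct)
  case (o_leaf R s \<alpha> \<Delta>)
  then obtain R' where "\<Delta> = return_pmf (s, R')" "\<forall>s'. plts s' R \<alpha> (return_pmf (s', R'))"
    using plts_vis by blast
  then show ?case using o_leaf.hyps(1) by (blast intro: ostep.o_leaf)
next
  case (o_l \<pi> s R1 \<alpha> \<Delta> R2)
  then obtain R' where "\<Delta> = return_pmf (s, R')" "\<forall>s'. ostep \<pi> s' R1 \<alpha> (return_pmf (s', R'))" by blast
  then show ?case using ostep.o_l[of \<pi> _ R1 \<alpha> _ R2] by fastforce
next
  case (o_r \<pi> s R2 \<alpha> \<Delta> R1)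
  then obtain R' where "\<Delta> = return_pmf (s, R')" "\<forall>s'. ostep \<pi> s' R2 \<alpha> (return_pmf (s', R'))" by blast
  then show ?case using ostep.o_r[of \<pi> _ R2 \<alpha> _ R1] by fastforce
qed

lemma vis_state:
  assumes "plts s P \<alpha> (return_pmf (s, P'))" "\<alpha> \<noteq> TauA"
  shows "plts s' P \<alpha> (return_pmf (s', P'))"
proof -
  obtain P'' where e: "return_pmf (s, P') = return_pmf (s, P'')" and a: "\<forall>s'. plts s' P \<alpha> (return_pmf (s', P''))"
    using plts_vis[OF assms] by blast
  from e have "P' = P''" by simp
  with a show ?thesis by blast
qed

lemma ovis_state:
  assumes "ostep \<pi> s R \<alpha> (return_pmf (s, R'))" "\<alpha> \<noteq> TauA"
  shows "ostep \<pi> s' R \<alpha> (return_pmf (s', R'))"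
proof -
  obtain R'' where e: "return_pmf (s, R') = return_pmf (s, R'')" and a: "\<forall>s'. ostep \<pi> s' R \<alpha> (return_pmf (s', R''))"
    using ostep_vis[OF assms] by blast
  from e have "R' = R''" by simp
  with a show ?thesis by blast
qed

lemma plts_Par_Discard:
  assumes "plts s (Par A (Discard es)) \<alpha> \<Delta>"
  shows "\<exists>\<Delta>1. plts s A \<alpha> \<Delta>1 \<and> \<Delta> = map_pmf (\<lambda>(s', P'). (s', Par P' (Discard es))) \<Delta>1"
  using assms by (cases rule: plts_Par) auto

section \<open>Transitions respect structural congruence\<close>

definition SR :: "qst \<times> proc \<Rightarrow> qst \<times> proc \<Rightarrow> bool" where
  "SR x y \<longleftrightarrow> fst x = fst y \<and> snd x \<equiv>\<^sub>s snd y"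

definition sim :: "proc \<Rightarrow> proc \<Rightarrow> bool" where
  "sim P Q \<longleftrightarrow> (\<forall>s \<alpha> \<Delta>. plts s P \<alpha> \<Delta> \<longrightarrow> (\<exists>\<Delta>'. plts s Q \<alpha> \<Delta>' \<and> rel_pmf SR \<Delta> \<Delta>'))"

lemma simI:
  "(\<And>s \<alpha> \<Delta>. plts s P \<alpha> \<Delta> \<Longrightarrow> \<exists>\<Delta>'. plts s Q \<alpha> \<Delta>' \<and> rel_pmf SR \<Delta> \<Delta>') \<Longrightarrow> sim P Q"
  by (auto simp: sim_def)

lemma simD: "sim P Q \<Longrightarrow> plts s P \<alpha> \<Delta> \<Longrightarrow> \<exists>\<Delta>'. plts s Q \<alpha> \<Delta>' \<and> rel_pmf SR \<Delta> \<Delta>'"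
  unfolding sim_def by blast

lemma rel_SR_refl: "rel_pmf SR \<Delta> \<Delta>"
  by (rule rel_pmf_reflI) (simp add: SR_def sc_refl)

lemma rel_SR_trans: "rel_pmf SR a b \<Longrightarrow> rel_pmf SR b c \<Longrightarrow> rel_pmf SR a c"
proof -
  assume "rel_pmf SR a b" "rel_pmf SR b c"
  then have "rel_pmf (SR OO SR) a c" by (auto simp: pmf.rel_compp)
  then show ?thesis by (rule pmf.rel_mono_strong) (auto simp: SR_def intro: sc_trans)
qed

lemma sim_refl: "sim P P"
  by (auto simp: sim_def intro: rel_SR_refl)

lemma sim_trans: "sim P Q \<Longrightarrow> sim Q R \<Longrightarrow> sim P R"
  unfolding sim_def by (meson rel_SR_trans)

lemma rel_ret: "P \<equiv>\<^sub>s Q \<Longrightarrow> rel_pmf SR (return_pmf (s, P)) (return_pmf (s, Q))"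
  by (simp add: rel_return_pmf SR_def)

lemma rel_map2:
  assumes "rel_pmf SR \<Delta> \<Delta>'" "\<And>X X'. X \<equiv>\<^sub>s X' \<Longrightarrow> h X \<equiv>\<^sub>s h' X'"
  shows "rel_pmf SR (map_pmf (\<lambda>(s', P'). (s', h P')) \<Delta>) (map_pmf (\<lambda>(s', P'). (s', h' P')) \<Delta>')"
  unfolding pmf.rel_map using assms(1)
  by (rule pmf.rel_mono_strong) (auto simp: SR_def assms(2) split: prod.splits)

lemma rel_map1:
  assumes "\<And>s X. (s, X) \<in> set_pmf \<Delta> \<Longrightarrow> h X \<equiv>\<^sub>s h' X"
  shows "rel_pmf SR (map_pmf (\<lambda>(s', P'). (s', h P')) \<Delta>) (map_pmf (\<lambda>(s', P'). (s', h' P')) \<Delta>)"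
  unfolding pmf.rel_map
  by (rule rel_pmf_reflI) (auto simp: SR_def assms split: prod.splits)

lemma map_id_lift: "map_pmf (\<lambda>(s', P'). (s', P')) \<Delta> = \<Delta>"
  by (simp add: case_prod_unfold)

lemma rel_map_l:
  assumes "\<And>s X. (s, X) \<in> set_pmf \<Delta> \<Longrightarrow> h X \<equiv>\<^sub>s X"
  shows "rel_pmf SR (map_pmf (\<lambda>(s', P'). (s', h P')) \<Delta>) \<Delta>"
  using rel_map1[of \<Delta> h "\<lambda>X. X"] assms by (simp add: map_id_lift)

lemma rel_map_r:
  assumes "\<And>s X. (s, X) \<in> set_pmf \<Delta> \<Longrightarrow> X \<equiv>\<^sub>s h X"
  shows "rel_pmf SR \<Delta> (map_pmf (\<lambda>(s', P'). (s', h P')) \<Delta>)"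
  using rel_map1[of \<Delta> "\<lambda>X. X" h] assms by (simp add: map_id_lift)

lemma map_lift_comp:
  "map_pmf (\<lambda>(s', P'). (s', f P')) (map_pmf (\<lambda>(s', P'). (s', g P')) \<Delta>) = map_pmf (\<lambda>(s', P'). (s', f (g P'))) \<Delta>"
  by (simp add: pmf.map_comp comp_def case_prod_unfold)

lemma map_lift_ret: "map_pmf (\<lambda>(s', P'). (s', f P')) (return_pmf (s, P)) = return_pmf (s, f P)"
  by simp

lemma sim_vis:
  assumes "sim P P'" "plts s P \<alpha> (return_pmf (s, P1))" "\<alpha> \<noteq> TauA"
  shows "\<exists>P1'. plts s P' \<alpha> (return_pmf (s, P1')) \<and> P1 \<equiv>\<^sub>s P1'"
proof -
  obtain \<Delta>' where d: "plts s P' \<alpha> \<Delta>'" "rel_pmf SR (return_pmf (s, P1)) \<Delta>'"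
    using simD[OF assms(1,2)] by blast
  obtain X where "\<Delta>' = return_pmf (s, X)" using plts_vis[OF d(1) assms(3)] by blast
  with d show ?thesis by (auto simp: rel_return_pmf SR_def)
qed

lemma parl_ret: "plts s P \<alpha> (return_pmf (s, P')) \<Longrightarrow> plts s (Par P Q) \<alpha> (return_pmf (s, Par P' Q))"
  using plts.p_parl[of s P \<alpha> "return_pmf (s, P')" Q] by simp

lemma parr_ret: "plts s Q \<alpha> (return_pmf (s, Q')) \<Longrightarrow> plts s (Par P Q) \<alpha> (return_pmf (s, Par P Q'))"
  using plts.p_parr[of s Q \<alpha> "return_pmf (s, Q')" P] by simp

lemma res_ret: "plts s P \<alpha> (return_pmf (s, P')) \<Longrightarrow> chan_of \<alpha> \<noteq> Some c \<Longrightarrow>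
    plts s (Res c P) \<alpha> (return_pmf (s, Res c P'))"
  using plts.p_res[of s P \<alpha> "return_pmf (s, P')" c] by simp

lemma plts_Par_vis:
  assumes "plts s (Par P Q) \<alpha> (return_pmf (s, X))" "\<alpha> \<noteq> TauA"
  shows "(\<exists>P'. plts s P \<alpha> (return_pmf (s, P')) \<and> X = Par P' Q) \<or>
         (\<exists>Q'. plts s Q \<alpha> (return_pmf (s, Q')) \<and> X = Par P Q')"
proof (rule plts_Par[OF assms(1)])
  fix \<Delta> assume h: "return_pmf (s, X) = map_pmf (\<lambda>(s', P'). (s', Par P' Q)) \<Delta>" "plts s P \<alpha> \<Delta>"
  obtain P' where "\<Delta> = return_pmf (s, P')" using plts_vis[OF h(2) assms(2)] by blast
  with h show ?thesis by auto
next
  fix \<Delta> assume h: "return_pmf (s, X) = map_pmf (\<lambda>(s', Q'). (s', Par P Q')) \<Delta>" "plts s Q \<alpha> \<Delta>"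
  obtain Q' where "\<Delta> = return_pmf (s, Q')" using plts_vis[OF h(2) assms(2)] by blast
  with h show ?thesis by auto
qed (use assms(2) in auto)

lemma plts_Res_vis:
  assumes "plts s (Res c P) \<alpha> (return_pmf (s, X))" "\<alpha> \<noteq> TauA"
  shows "\<exists>P'. plts s P \<alpha> (return_pmf (s, P')) \<and> X = Res c P' \<and> chan_of \<alpha> \<noteq> Some c"
proof (rule plts_Res[OF assms(1)])
  fix \<Delta> assume h: "return_pmf (s, X) = map_pmf (\<lambda>(s', P'). (s', Res c P')) \<Delta>" "plts s P \<alpha> \<Delta>"
    "chan_of \<alpha> \<noteq> Some c"
  obtain P' where "\<Delta> = return_pmf (s, P')" using plts_vis[OF h(2) assms(2)] by blast
  with h show ?thesis by auto
qed

lemma scong_subst: "P \<equiv>\<^sub>s Q \<Longrightarrow> subst x v P \<equiv>\<^sub>s subst x v Q"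
proof (induction rule: scong.induct)
  case (sc_sym P Q) then show ?case by (blast intro: scong.sc_sym)
next
  case (sc_trans P Q R) then show ?case by (blast intro: scong.sc_trans)
next
  case (sc_inp P Q c y) then show ?case by (simp add: scI)
next
  case (sc_meas P Q M es y) then show ?case by (simp add: scI)
next
  case (sc_discard_app xs ys) then show ?case by (simp add: scI)
qed (simp_all add: scI)

lemma vacuous_sim: "(\<And>s \<alpha> \<Delta>. \<not> plts s P \<alpha> \<Delta>) \<Longrightarrow> sim P Q"
  by (auto simp: sim_def)

lemma sim_out: "P \<equiv>\<^sub>s Q \<Longrightarrow> sim (Out c e P) (Out c e Q)"
  by (rule simI, erule plts_Out) (blast intro: plts.intros rel_ret)

lemma sim_inp: "P \<equiv>\<^sub>s Q \<Longrightarrow> sim (Inp c x P) (Inp c x Q)"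
  by (rule simI, erule plts_Inp) (blast intro: plts.intros rel_ret scong_subst)

lemma sim_tau: "P \<equiv>\<^sub>s Q \<Longrightarrow> sim (Tau P) (Tau Q)"
  by (rule simI, erule plts_Tau) (blast intro: plts.intros rel_ret)

lemma sim_sop: "P \<equiv>\<^sub>s Q \<Longrightarrow> sim (SOp K es P) (SOp K es Q)"
  by (rule simI, erule plts_SOp) (blast intro: plts.intros rel_ret)

lemma sim_meas: assumes PQ: "P \<equiv>\<^sub>s Q" shows "sim (Meas M es y P) (Meas M es y Q)"
proof (rule simI)
  fix s \<alpha> \<Delta> assume "plts s (Meas M es y P) \<alpha> \<Delta>"
  then show "\<exists>\<Delta>'. plts s (Meas M es y Q) \<alpha> \<Delta>' \<and> rel_pmf SR \<Delta> \<Delta>'"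
  proof (rule plts_Meas)
    fix xs assume h: "\<alpha> = TauA" "\<Delta> = meas_dist M xs y P s" "es = qargs xs" "distinct xs" "set xs \<subseteq> fst s"
      "\<forall>m<length M. 0 \<le> meas_prob M xs s m" "(\<Sum>m<length M. meas_prob M xs s m) = 1"
    have "plts s (Meas M es y Q) \<alpha> (meas_dist M xs y Q s)" using h by (auto intro: plts.p_meas)
    moreover have "rel_pmf SR (meas_dist M xs y P s) (meas_dist M xs y Q s)"
      unfolding meas_dist_map[OF h(6,7)] pmf.rel_map
      by (rule rel_pmf_reflI) (simp add: SR_def scong_subst[OF PQ])
    ultimately show ?thesis using h by blast
  qed
qed

lemma sim_sum: "sim P P' \<Longrightarrow> sim Q Q' \<Longrightarrow> sim (Sum P Q) (Sum P' Q')"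
  by (rule simI, erule plts_Sum) (blast dest: simD intro: plts.intros)+

lemma sim_if: "sim P P' \<Longrightarrow> sim Q Q' \<Longrightarrow> sim (If b P Q) (If b P' Q')"
  by (rule simI, erule plts_If) (blast dest: simD intro: plts.intros)+

lemma sim_par:
  assumes "P \<equiv>\<^sub>s P'" "Q \<equiv>\<^sub>s Q'" "sim P P'" "sim Q Q'"
  shows "sim (Par P Q) (Par P' Q')"
proof (rule simI)
  fix s \<alpha> \<Delta> assume "plts s (Par P Q) \<alpha> \<Delta>"
  then show "\<exists>\<Delta>'. plts s (Par P' Q') \<alpha> \<Delta>' \<and> rel_pmf SR \<Delta> \<Delta>'"
  proof (rule plts_Par)
    fix \<Delta>1 assume h: "\<Delta> = map_pmf (\<lambda>(s', X). (s', Par X Q)) \<Delta>1" "plts s P \<alpha> \<Delta>1"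
    obtain \<Delta>2 where "plts s P' \<alpha> \<Delta>2" "rel_pmf SR \<Delta>1 \<Delta>2" using simD[OF assms(3) h(2)] by blast
    moreover have "rel_pmf SR (map_pmf (\<lambda>(s', X). (s', Par X Q)) \<Delta>1) (map_pmf (\<lambda>(s', X). (s', Par X Q')) \<Delta>2)"
      by (rule rel_map2[where h="\<lambda>X. Par X Q" and h'="\<lambda>X. Par X Q'"])
         (use \<open>rel_pmf SR \<Delta>1 \<Delta>2\<close> assms(2) in \<open>auto intro: sc_par\<close>)
    ultimately show ?thesis using h by (blast intro: plts.p_parl)
  next
    fix \<Delta>1 assume h: "\<Delta> = map_pmf (\<lambda>(s', X). (s', Par P X)) \<Delta>1" "plts s Q \<alpha> \<Delta>1"
    obtain \<Delta>2 where "plts s Q' \<alpha> \<Delta>2" "rel_pmf SR \<Delta>1 \<Delta>2" using simD[OF assms(4) h(2)] by blast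
    moreover have "rel_pmf SR (map_pmf (\<lambda>(s', X). (s', Par P X)) \<Delta>1) (map_pmf (\<lambda>(s', X). (s', Par P' X)) \<Delta>2)"
      by (rule rel_map2[where h="\<lambda>X. Par P X" and h'="\<lambda>X. Par P' X"])
         (use \<open>rel_pmf SR \<Delta>1 \<Delta>2\<close> assms(1) in \<open>auto intro: sc_par\<close>)
    ultimately show ?thesis using h by (blast intro: plts.p_parr)
  next
    fix c v P1 Q1 assume h: "\<alpha> = TauA" "\<Delta> = return_pmf (s, Par P1 Q1)"
      "plts s P (OutA c v) (return_pmf (s, P1))" "plts s Q (InA c v) (return_pmf (s, Q1))"
    obtain P2 where p: "plts s P' (OutA c v) (return_pmf (s, P2))" "P1 \<equiv>\<^sub>s P2"
      using sim_vis[OF assms(3) h(3)] by auto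
    obtain Q2 where q: "plts s Q' (InA c v) (return_pmf (s, Q2))" "Q1 \<equiv>\<^sub>s Q2"
      using sim_vis[OF assms(4) h(4)] by auto
    show ?thesis using h p q by (blast intro: plts.p_comml rel_ret sc_par)
  next
    fix c v P1 Q1 assume h: "\<alpha> = TauA" "\<Delta> = return_pmf (s, Par P1 Q1)"
      "plts s P (InA c v) (return_pmf (s, P1))" "plts s Q (OutA c v) (return_pmf (s, Q1))"
    obtain P2 where p: "plts s P' (InA c v) (return_pmf (s, P2))" "P1 \<equiv>\<^sub>s P2"
      using sim_vis[OF assms(3) h(3)] by auto
    obtain Q2 where q: "plts s Q' (OutA c v) (return_pmf (s, Q2))" "Q1 \<equiv>\<^sub>s Q2"
      using sim_vis[OF assms(4) h(4)] by auto
    show ?thesis using h p q by (blast intro: plts.p_commr rel_ret sc_par)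
  qed
qed

lemma sim_res:
  assumes "P \<equiv>\<^sub>s P'" "sim P P'"
  shows "sim (Res c P) (Res c P')"
proof (rule simI)
  fix s \<alpha> \<Delta> assume "plts s (Res c P) \<alpha> \<Delta>"
  then show "\<exists>\<Delta>'. plts s (Res c P') \<alpha> \<Delta>' \<and> rel_pmf SR \<Delta> \<Delta>'"
  proof (rule plts_Res)
    fix \<Delta>1 assume h: "\<Delta> = map_pmf (\<lambda>(s', X). (s', Res c X)) \<Delta>1" "plts s P \<alpha> \<Delta>1" "chan_of \<alpha> \<noteq> Some c"
    obtain \<Delta>2 where "plts s P' \<alpha> \<Delta>2" "rel_pmf SR \<Delta>1 \<Delta>2" using simD[OF assms(2) h(2)] by blast
    moreover have "rel_pmf SR (map_pmf (\<lambda>(s', X). (s', Res c X)) \<Delta>1) (map_pmf (\<lambda>(s', X). (s', Res c X)) \<Delta>2)"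
      by (rule rel_map2[where h="\<lambda>X. Res c X" and h'="\<lambda>X. Res c X"])
         (use \<open>rel_pmf SR \<Delta>1 \<Delta>2\<close> in \<open>auto intro: sc_res\<close>)
    ultimately show ?thesis using h by (blast intro: plts.p_res)
  qed
qed

lemma sim_par_nil1: "sim (Par P Nil) P"
proof (rule simI)
  fix s \<alpha> \<Delta> assume "plts s (Par P Nil) \<alpha> \<Delta>"
  then show "\<exists>\<Delta>'. plts s P \<alpha> \<Delta>' \<and> rel_pmf SR \<Delta> \<Delta>'"
  proof (rule plts_Par)
    fix \<Delta>1 assume h: "\<Delta> = map_pmf (\<lambda>(s', X). (s', Par X Nil)) \<Delta>1" "plts s P \<alpha> \<Delta>1"
    have "rel_pmf SR (map_pmf (\<lambda>(s', X). (s', Par X Nil)) \<Delta>1) \<Delta>1"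
      by (rule rel_map_l[where h="\<lambda>X. Par X Nil"]) (rule sc_par_nil)
    then show ?thesis using h by blast
  qed auto
qed

lemma sim_par_nil2: "sim P (Par P Nil)"
proof (rule simI)
  fix s \<alpha> \<Delta> assume h: "plts s P \<alpha> \<Delta>"
  have "rel_pmf SR \<Delta> (map_pmf (\<lambda>(s', X). (s', Par X Nil)) \<Delta>)"
    by (rule rel_map_r[where h="\<lambda>X. Par X Nil"]) (rule sc_sym, rule sc_par_nil)
  then show "\<exists>\<Delta>'. plts s (Par P Nil) \<alpha> \<Delta>' \<and> rel_pmf SR \<Delta> \<Delta>'" using h by (blast intro: plts.p_parl)
qed

lemma sim_par_comm: "sim (Par P Q) (Par Q P)"
proof (rule simI)
  fix s \<alpha> \<Delta> assume "plts s (Par P Q) \<alpha> \<Delta>"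
  then show "\<exists>\<Delta>'. plts s (Par Q P) \<alpha> \<Delta>' \<and> rel_pmf SR \<Delta> \<Delta>'"
  proof (rule plts_Par)
    fix \<Delta>1 assume h: "\<Delta> = map_pmf (\<lambda>(s', X). (s', Par X Q)) \<Delta>1" "plts s P \<alpha> \<Delta>1"
    have "rel_pmf SR (map_pmf (\<lambda>(s', X). (s', Par X Q)) \<Delta>1) (map_pmf (\<lambda>(s', X). (s', Par Q X)) \<Delta>1)"
      by (rule rel_map1[where h="\<lambda>X. Par X Q" and h'="\<lambda>X. Par Q X"]) (rule sc_par_comm)
    then show ?thesis using h by (blast intro: plts.p_parr)
  next
    fix \<Delta>1 assume h: "\<Delta> = map_pmf (\<lambda>(s', X). (s', Par P X)) \<Delta>1" "plts s Q \<alpha> \<Delta>1"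
    have "rel_pmf SR (map_pmf (\<lambda>(s', X). (s', Par P X)) \<Delta>1) (map_pmf (\<lambda>(s', X). (s', Par X P)) \<Delta>1)"
      by (rule rel_map1[where h="\<lambda>X. Par P X" and h'="\<lambda>X. Par X P"]) (rule sc_par_comm)
    then show ?thesis using h by (blast intro: plts.p_parl)
  next
    fix c v P1 Q1 assume h: "\<alpha> = TauA" "\<Delta> = return_pmf (s, Par P1 Q1)"
      "plts s P (OutA c v) (return_pmf (s, P1))" "plts s Q (InA c v) (return_pmf (s, Q1))"
    then show ?thesis by (blast intro: plts.p_commr rel_ret sc_par_comm)
  next
    fix c v P1 Q1 assume h: "\<alpha> = TauA" "\<Delta> = return_pmf (s, Par P1 Q1)"
      "plts s P (InA c v) (return_pmf (s, P1))" "plts s Q (OutA c v) (return_pmf (s, Q1))"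
    then show ?thesis by (blast intro: plts.p_comml rel_ret sc_par_comm)
  qed
qed

lemma sim_par_assoc1: "sim (Par (Par P Q) R) (Par P (Par Q R))"
proof (rule simI)
  fix s \<alpha> \<Delta> assume "plts s (Par (Par P Q) R) \<alpha> \<Delta>"
  then show "\<exists>\<Delta>'. plts s (Par P (Par Q R)) \<alpha> \<Delta>' \<and> rel_pmf SR \<Delta> \<Delta>'"
  proof (rule plts_Par)
    fix \<Delta>1 assume h: "\<Delta> = map_pmf (\<lambda>(s', X). (s', Par X R)) \<Delta>1" "plts s (Par P Q) \<alpha> \<Delta>1"
    from h(2) show ?thesis
    proof (rule plts_Par)
      fix \<Delta>2 assume h2: "\<Delta>1 = map_pmf (\<lambda>(s', X). (s', Par X Q)) \<Delta>2" "plts s P \<alpha> \<Delta>2"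
      have e: "\<Delta> = map_pmf (\<lambda>(s', X). (s', Par (Par X Q) R)) \<Delta>2" using h(1) h2(1) by (simp add: map_lift_comp)
      have "rel_pmf SR (map_pmf (\<lambda>(s', X). (s', Par (Par X Q) R)) \<Delta>2) (map_pmf (\<lambda>(s', X). (s', Par X (Par Q R))) \<Delta>2)"
        by (rule rel_map1[where h="\<lambda>X. Par (Par X Q) R" and h'="\<lambda>X. Par X (Par Q R)"]) (rule sc_par_assoc)
      then show ?thesis using e h2(2) by (blast intro: plts.p_parl)
    next
      fix \<Delta>2 assume h2: "\<Delta>1 = map_pmf (\<lambda>(s', X). (s', Par P X)) \<Delta>2" "plts s Q \<alpha> \<Delta>2"
      have e: "\<Delta> = map_pmf (\<lambda>(s', X). (s', Par (Par P X) R)) \<Delta>2" using h(1) h2(1) by (simp add: map_lift_comp)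
      have t: "plts s (Par P (Par Q R)) \<alpha> (map_pmf (\<lambda>(s', X). (s', Par P X)) (map_pmf (\<lambda>(s', X). (s', Par X R)) \<Delta>2))"
        using h2(2) by (intro plts.p_parr plts.p_parl)
      have "rel_pmf SR (map_pmf (\<lambda>(s', X). (s', Par (Par P X) R)) \<Delta>2) (map_pmf (\<lambda>(s', X). (s', Par P (Par X R))) \<Delta>2)"
        by (rule rel_map1[where h="\<lambda>X. Par (Par P X) R" and h'="\<lambda>X. Par P (Par X R)"]) (rule sc_par_assoc)
      then show ?thesis using e t by (auto simp: map_lift_comp)
    next
      fix c v P1 Q1 assume h2: "\<alpha> = TauA" "\<Delta>1 = return_pmf (s, Par P1 Q1)"
        "plts s P (OutA c v) (return_pmf (s, P1))" "plts s Q (InA c v) (return_pmf (s, Q1))"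
      have "plts s (Par P (Par Q R)) TauA (return_pmf (s, Par P1 (Par Q1 R)))"
        using h2 by (intro plts.p_comml parl_ret)
      then show ?thesis using h h2 by (auto intro: rel_ret sc_par_assoc)
    next
      fix c v P1 Q1 assume h2: "\<alpha> = TauA" "\<Delta>1 = return_pmf (s, Par P1 Q1)"
        "plts s P (InA c v) (return_pmf (s, P1))" "plts s Q (OutA c v) (return_pmf (s, Q1))"
      have "plts s (Par P (Par Q R)) TauA (return_pmf (s, Par P1 (Par Q1 R)))"
        using h2 by (intro plts.p_commr parl_ret)
      then show ?thesis using h h2 by (auto intro: rel_ret sc_par_assoc)
    qed
  next
    fix \<Delta>1 assume h: "\<Delta> = map_pmf (\<lambda>(s', X). (s', Par (Par P Q) X)) \<Delta>1" "plts s R \<alpha> \<Delta>1"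
    have t: "plts s (Par P (Par Q R)) \<alpha> (map_pmf (\<lambda>(s', X). (s', Par P X)) (map_pmf (\<lambda>(s', X). (s', Par Q X)) \<Delta>1))"
      using h(2) by (intro plts.p_parr)
    have "rel_pmf SR (map_pmf (\<lambda>(s', X). (s', Par (Par P Q) X)) \<Delta>1) (map_pmf (\<lambda>(s', X). (s', Par P (Par Q X))) \<Delta>1)"
      by (rule rel_map1[where h="\<lambda>X. Par (Par P Q) X" and h'="\<lambda>X. Par P (Par Q X)"]) (rule sc_par_assoc)
    then show ?thesis using h t by (auto simp: map_lift_comp)
  next
    fix c v X R1 assume h: "\<alpha> = TauA" "\<Delta> = return_pmf (s, Par X R1)"
      "plts s (Par P Q) (OutA c v) (return_pmf (s, X))" "plts s R (InA c v) (return_pmf (s, R1))"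
    from plts_Par_vis[OF h(3), simplified] show ?thesis
    proof (elim disjE exE conjE)
      fix P1 assume p: "plts s P (OutA c v) (return_pmf (s, P1))" "X = Par P1 Q"
      have "plts s (Par P (Par Q R)) TauA (return_pmf (s, Par P1 (Par Q R1)))"
        using p h by (intro plts.p_comml parr_ret)
      then show ?thesis using h p by (auto intro: rel_ret sc_par_assoc)
    next
      fix Q1 assume q: "plts s Q (OutA c v) (return_pmf (s, Q1))" "X = Par P Q1"
      have "plts s (Par Q R) TauA (return_pmf (s, Par Q1 R1))" using q h by (intro plts.p_comml)
      then have "plts s (Par P (Par Q R)) TauA (return_pmf (s, Par P (Par Q1 R1)))" by (rule parr_ret)
      then show ?thesis using h q by (auto intro: rel_ret sc_par_assoc)
    qed
  next
    fix c v X R1 assume h: "\<alpha> = TauA" "\<Delta> = return_pmf (s, Par X R1)"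
      "plts s (Par P Q) (InA c v) (return_pmf (s, X))" "plts s R (OutA c v) (return_pmf (s, R1))"
    from plts_Par_vis[OF h(3), simplified] show ?thesis
    proof (elim disjE exE conjE)
      fix P1 assume p: "plts s P (InA c v) (return_pmf (s, P1))" "X = Par P1 Q"
      have "plts s (Par P (Par Q R)) TauA (return_pmf (s, Par P1 (Par Q R1)))"
        using p h by (intro plts.p_commr parr_ret)
      then show ?thesis using h p by (auto intro: rel_ret sc_par_assoc)
    next
      fix Q1 assume q: "plts s Q (InA c v) (return_pmf (s, Q1))" "X = Par P Q1"
      have "plts s (Par Q R) TauA (return_pmf (s, Par Q1 R1))" using q h by (intro plts.p_commr)
      then have "plts s (Par P (Par Q R)) TauA (return_pmf (s, Par P (Par Q1 R1)))" by (rule parr_ret)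
      then show ?thesis using h q by (auto intro: rel_ret sc_par_assoc)
    qed
  qed
qed

lemma sim_par_assoc2: "sim (Par P (Par Q R)) (Par (Par P Q) R)"
  by (meson sim_trans sim_par_comm sim_par_assoc1)

lemma sim_sum_nil1: "sim (Sum P Nil) P"
  by (rule simI, erule plts_Sum) (auto intro: rel_SR_refl)

lemma sim_sum_nil2: "sim P (Sum P Nil)"
  by (rule simI) (blast intro: plts.p_suml rel_SR_refl)

lemma sim_sum_comm: "sim (Sum P Q) (Sum Q P)"
  by (rule simI, erule plts_Sum) (blast intro: plts.p_suml plts.p_sumr rel_SR_refl)+

lemma sim_sum_assoc1: "sim (Sum (Sum P Q) R) (Sum P (Sum Q R))"
  by (rule simI, erule plts_Sum, erule plts_Sum) (blast intro: plts.p_suml plts.p_sumr rel_SR_refl)+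

lemma sim_sum_assoc2: "sim (Sum P (Sum Q R)) (Sum (Sum P Q) R)"
  by (meson sim_trans sim_sum_comm sim_sum_assoc1)

lemma no_plts_Res_Nil: "\<not> plts s (Res c Nil) \<alpha> \<Delta>"
  by (auto elim: plts_Res)

lemma no_plts_Par_Discard: "\<not> plts s (Par (Discard xs) (Discard ys)) \<alpha> \<Delta>"
  by (auto elim: plts_Par)

lemma sim_res_swap: "sim (Res c (Res d P)) (Res d (Res c P))"
proof (rule simI)
  fix s \<alpha> \<Delta> assume "plts s (Res c (Res d P)) \<alpha> \<Delta>"
  then show "\<exists>\<Delta>'. plts s (Res d (Res c P)) \<alpha> \<Delta>' \<and> rel_pmf SR \<Delta> \<Delta>'"
  proof (rule plts_Res)
    fix \<Delta>1 assume h: "\<Delta> = map_pmf (\<lambda>(s', X). (s', Res c X)) \<Delta>1" "plts s (Res d P) \<alpha> \<Delta>1" "chan_of \<alpha> \<noteq> Some c"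
    from h(2) show ?thesis
    proof (rule plts_Res)
      fix \<Delta>2 assume h2: "\<Delta>1 = map_pmf (\<lambda>(s', X). (s', Res d X)) \<Delta>2" "plts s P \<alpha> \<Delta>2" "chan_of \<alpha> \<noteq> Some d"
      have t: "plts s (Res d (Res c P)) \<alpha> (map_pmf (\<lambda>(s', X). (s', Res d X)) (map_pmf (\<lambda>(s', X). (s', Res c X)) \<Delta>2))"
        using h2 h by (intro plts.p_res) auto
      have "rel_pmf SR (map_pmf (\<lambda>(s', X). (s', Res c (Res d X))) \<Delta>2) (map_pmf (\<lambda>(s', X). (s', Res d (Res c X))) \<Delta>2)"
        by (rule rel_map1[where h="\<lambda>X. Res c (Res d X)" and h'="\<lambda>X. Res d (Res c X)"]) (rule sc_res_swap)
      then show ?thesis using h(1) h2(1) t by (auto simp: map_lift_comp)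
    qed
  qed
qed

lemma chan_ne: "plts s P \<alpha> \<Delta> \<Longrightarrow> c \<notin> fn P \<Longrightarrow> chan_of \<alpha> \<noteq> Some c"
  using plts_chan by blast

lemma deriv_fn: "plts s P \<alpha> \<Delta> \<Longrightarrow> (s', X) \<in> set_pmf \<Delta> \<Longrightarrow> c \<notin> fn P \<Longrightarrow> c \<notin> fn X"
  using plts_deriv by fastforce

lemma sim_res_extr1:
  assumes c: "c \<notin> fn P"
  shows "sim (Par P (Res c Q)) (Res c (Par P Q))"
proof (rule simI)
  fix s \<alpha> \<Delta> assume "plts s (Par P (Res c Q)) \<alpha> \<Delta>"
  then show "\<exists>\<Delta>'. plts s (Res c (Par P Q)) \<alpha> \<Delta>' \<and> rel_pmf SR \<Delta> \<Delta>'"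
  proof (rule plts_Par)
    fix \<Delta>1 assume h: "\<Delta> = map_pmf (\<lambda>(s', X). (s', Par X (Res c Q))) \<Delta>1" "plts s P \<alpha> \<Delta>1"
    have t: "plts s (Res c (Par P Q)) \<alpha> (map_pmf (\<lambda>(s', X). (s', Res c X)) (map_pmf (\<lambda>(s', X). (s', Par X Q)) \<Delta>1))"
      using h(2) chan_ne[OF h(2) c] by (intro plts.p_res plts.p_parl)
    have "rel_pmf SR (map_pmf (\<lambda>(s', X). (s', Par X (Res c Q))) \<Delta>1) (map_pmf (\<lambda>(s', X). (s', Res c (Par X Q))) \<Delta>1)"
      by (rule rel_map1[where h="\<lambda>X. Par X (Res c Q)" and h'="\<lambda>X. Res c (Par X Q)"])
         (rule sc_res_extr, rule deriv_fn[OF h(2) _ c])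
    then show ?thesis using h(1) t by (auto simp: map_lift_comp)
  next
    fix \<Delta>1 assume h: "\<Delta> = map_pmf (\<lambda>(s', X). (s', Par P X)) \<Delta>1" "plts s (Res c Q) \<alpha> \<Delta>1"
    from h(2) show ?thesis
    proof (rule plts_Res)
      fix \<Delta>2 assume h2: "\<Delta>1 = map_pmf (\<lambda>(s', X). (s', Res c X)) \<Delta>2" "plts s Q \<alpha> \<Delta>2" "chan_of \<alpha> \<noteq> Some c"
      have t: "plts s (Res c (Par P Q)) \<alpha> (map_pmf (\<lambda>(s', X). (s', Res c X)) (map_pmf (\<lambda>(s', X). (s', Par P X)) \<Delta>2))"
        using h2 by (intro plts.p_res plts.p_parr)
      have "rel_pmf SR (map_pmf (\<lambda>(s', X). (s', Par P (Res c X))) \<Delta>2) (map_pmf (\<lambda>(s', X). (s', Res c (Par P X))) \<Delta>2)"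
        by (rule rel_map1[where h="\<lambda>X. Par P (Res c X)" and h'="\<lambda>X. Res c (Par P X)"])
           (rule sc_res_extr[OF c])
      then show ?thesis using h(1) h2(1) t by (auto simp: map_lift_comp)
    qed
  next
    fix d v P1 Y assume h: "\<alpha> = TauA" "\<Delta> = return_pmf (s, Par P1 Y)"
      "plts s P (OutA d v) (return_pmf (s, P1))" "plts s (Res c Q) (InA d v) (return_pmf (s, Y))"
    obtain Q1 where q: "plts s Q (InA d v) (return_pmf (s, Q1))" "Y = Res c Q1" "d \<noteq> c"
      using plts_Res_vis[OF h(4)] by auto
    have t: "plts s (Res c (Par P Q)) TauA (return_pmf (s, Res c (Par P1 Q1)))"
      using h(3) q by (intro res_ret plts.p_comml) simp_all
    have "c \<notin> fn P1" using deriv_fn[OF h(3) _ c, of s] by simp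
    then have "Par P1 (Res c Q1) \<equiv>\<^sub>s Res c (Par P1 Q1)" by (rule sc_res_extr)
    then have "rel_pmf SR \<Delta> (return_pmf (s, Res c (Par P1 Q1)))" using h q by (simp add: rel_return_pmf SR_def)
    then show ?thesis using t h by blast
  next
    fix d v P1 Y assume h: "\<alpha> = TauA" "\<Delta> = return_pmf (s, Par P1 Y)"
      "plts s P (InA d v) (return_pmf (s, P1))" "plts s (Res c Q) (OutA d v) (return_pmf (s, Y))"
    obtain Q1 where q: "plts s Q (OutA d v) (return_pmf (s, Q1))" "Y = Res c Q1" "d \<noteq> c"
      using plts_Res_vis[OF h(4)] by auto
    have t: "plts s (Res c (Par P Q)) TauA (return_pmf (s, Res c (Par P1 Q1)))"
      using h(3) q by (intro res_ret plts.p_commr) simp_all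
    have "c \<notin> fn P1" using deriv_fn[OF h(3) _ c, of s] by simp
    then have "Par P1 (Res c Q1) \<equiv>\<^sub>s Res c (Par P1 Q1)" by (rule sc_res_extr)
    then have "rel_pmf SR \<Delta> (return_pmf (s, Res c (Par P1 Q1)))" using h q by (simp add: rel_return_pmf SR_def)
    then show ?thesis using t h by blast
  qed
qed

lemma sim_res_extr2:
  assumes c: "c \<notin> fn P"
  shows "sim (Res c (Par P Q)) (Par P (Res c Q))"
proof (rule simI)
  fix s \<alpha> \<Delta> assume "plts s (Res c (Par P Q)) \<alpha> \<Delta>"
  then show "\<exists>\<Delta>'. plts s (Par P (Res c Q)) \<alpha> \<Delta>' \<and> rel_pmf SR \<Delta> \<Delta>'"
  proof (rule plts_Res)
    fix \<Delta>1 assume h: "\<Delta> = map_pmf (\<lambda>(s', X). (s', Res c X)) \<Delta>1" "plts s (Par P Q) \<alpha> \<Delta>1" "chan_of \<alpha> \<noteq> Some c"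
    from h(2) show ?thesis
    proof (rule plts_Par)
      fix \<Delta>2 assume h2: "\<Delta>1 = map_pmf (\<lambda>(s', X). (s', Par X Q)) \<Delta>2" "plts s P \<alpha> \<Delta>2"
      have t: "plts s (Par P (Res c Q)) \<alpha> (map_pmf (\<lambda>(s', X). (s', Par X (Res c Q))) \<Delta>2)"
        using h2 by (intro plts.p_parl)
      have "rel_pmf SR (map_pmf (\<lambda>(s', X). (s', Res c (Par X Q))) \<Delta>2) (map_pmf (\<lambda>(s', X). (s', Par X (Res c Q))) \<Delta>2)"
        by (rule rel_map1[where h="\<lambda>X. Res c (Par X Q)" and h'="\<lambda>X. Par X (Res c Q)"])
           (rule sc_sym, rule sc_res_extr, rule deriv_fn[OF h2(2) _ c])
      then show ?thesis using h(1) h2(1) t by (auto simp: map_lift_comp)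
    next
      fix \<Delta>2 assume h2: "\<Delta>1 = map_pmf (\<lambda>(s', X). (s', Par P X)) \<Delta>2" "plts s Q \<alpha> \<Delta>2"
      have t: "plts s (Par P (Res c Q)) \<alpha> (map_pmf (\<lambda>(s', X). (s', Par P X)) (map_pmf (\<lambda>(s', X). (s', Res c X)) \<Delta>2))"
        using h2 h(3) by (intro plts.p_parr plts.p_res)
      have "rel_pmf SR (map_pmf (\<lambda>(s', X). (s', Res c (Par P X))) \<Delta>2) (map_pmf (\<lambda>(s', X). (s', Par P (Res c X))) \<Delta>2)"
        by (rule rel_map1[where h="\<lambda>X. Res c (Par P X)" and h'="\<lambda>X. Par P (Res c X)"])
           (rule sc_sym, rule sc_res_extr[OF c])
      then show ?thesis using h(1) h2(1) t by (auto simp: map_lift_comp)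
    next
      fix d v P1 Q1 assume h2: "\<alpha> = TauA" "\<Delta>1 = return_pmf (s, Par P1 Q1)"
        "plts s P (OutA d v) (return_pmf (s, P1))" "plts s Q (InA d v) (return_pmf (s, Q1))"
      have "d \<noteq> c" using chan_ne[OF h2(3) c] by simp
      then have t: "plts s (Par P (Res c Q)) TauA (return_pmf (s, Par P1 (Res c Q1)))"
        using h2 \<open>d \<noteq> c\<close> by (intro plts.p_comml res_ret) simp_all
      have "c \<notin> fn P1" using deriv_fn[OF h2(3) _ c, of s] by simp
      have "Res c (Par P1 Q1) \<equiv>\<^sub>s Par P1 (Res c Q1)" by (rule sc_sym, rule sc_res_extr, fact)
      then have "rel_pmf SR \<Delta> (return_pmf (s, Par P1 (Res c Q1)))" using h h2 by (simp add: rel_return_pmf SR_def)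
      then show ?thesis using t h2 by blast
    next
      fix d v P1 Q1 assume h2: "\<alpha> = TauA" "\<Delta>1 = return_pmf (s, Par P1 Q1)"
        "plts s P (InA d v) (return_pmf (s, P1))" "plts s Q (OutA d v) (return_pmf (s, Q1))"
      have "d \<noteq> c" using chan_ne[OF h2(3) c] by simp
      then have t: "plts s (Par P (Res c Q)) TauA (return_pmf (s, Par P1 (Res c Q1)))"
        using h2 \<open>d \<noteq> c\<close> by (intro plts.p_commr res_ret) simp_all
      have "c \<notin> fn P1" using deriv_fn[OF h2(3) _ c, of s] by simp
      have "Res c (Par P1 Q1) \<equiv>\<^sub>s Par P1 (Res c Q1)" by (rule sc_sym, rule sc_res_extr, fact)
      then have "rel_pmf SR \<Delta> (return_pmf (s, Par P1 (Res c Q1)))" using h h2 by (simp add: rel_return_pmf SR_def)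
      then show ?thesis using t h2 by blast
    qed
  qed
qed

theorem harmony: "P \<equiv>\<^sub>s Q \<Longrightarrow> sim P Q \<and> sim Q P"
proof (induction rule: scong.induct)
  case (sc_refl P) then show ?case by (simp add: sim_refl)
next
  case (sc_sym P Q) then show ?case by simp
next
  case (sc_trans P Q R) then show ?case by (blast intro: sim_trans)
next
  case (sc_out P Q c e) then show ?case by (blast intro: sim_out scong.sc_sym)
next
  case (sc_inp P Q c x) then show ?case by (blast intro: sim_inp scong.sc_sym)
next
  case (sc_tau P Q) then show ?case by (blast intro: sim_tau scong.sc_sym)
next
  case (sc_sop P Q K es) then show ?case by (blast intro: sim_sop scong.sc_sym)
next
  case (sc_meas P Q M es y) then show ?case by (blast intro: sim_meas scong.sc_sym)
next
  case (sc_sum P P' Q Q') then show ?case by (blast intro: sim_sum)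
next
  case (sc_par P P' Q Q') then show ?case by (blast intro: sim_par scong.sc_sym)
next
  case (sc_res P Q c) then show ?case by (blast intro: sim_res scong.sc_sym)
next
  case (sc_if P P' Q Q' b) then show ?case by (blast intro: sim_if)
next
  case (sc_par_nil P) then show ?case by (simp add: sim_par_nil1 sim_par_nil2)
next
  case (sc_par_comm P Q) then show ?case by (simp add: sim_par_comm)
next
  case (sc_par_assoc P Q R) then show ?case by (simp add: sim_par_assoc1 sim_par_assoc2)
next
  case (sc_sum_nil P) then show ?case by (simp add: sim_sum_nil1 sim_sum_nil2)
next
  case (sc_sum_comm P Q) then show ?case by (simp add: sim_sum_comm)
next
  case (sc_sum_assoc P Q R) then show ?case by (simp add: sim_sum_assoc1 sim_sum_assoc2)
next
  case (sc_res_nil c) then show ?case by (simp add: vacuous_sim no_plts_Res_Nil)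
next
  case (sc_res_swap c d P) then show ?case by (simp add: sim_res_swap)
next
  case (sc_res_extr c P Q) then show ?case by (simp add: sim_res_extr1 sim_res_extr2)
next
  case sc_discard_nil then show ?case by (simp add: vacuous_sim)
next
  case (sc_discard_app xs ys) then show ?case by (simp add: vacuous_sim no_plts_Par_Discard)
qed

lemma scong_step:
  "P \<equiv>\<^sub>s Q \<Longrightarrow> plts s P \<alpha> \<Delta> \<Longrightarrow> \<exists>\<Delta>'. plts s Q \<alpha> \<Delta>' \<and> rel_pmf SR \<Delta> \<Delta>'"
  using harmony simD by blast

abbreviation DQ :: "qubit list \<Rightarrow> proc" where "DQ qs \<equiv> Discard (qargs qs)"

definition ddc :: "qubit list \<Rightarrow> conf \<Rightarrow> bool" where
  "ddc qs C \<longleftrightarrow> (\<exists>s P R X. C = Conf s P R \<and> P \<equiv>\<^sub>s Par X (DQ qs) \<and> qbits X \<inter> set qs = {})"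

lemma ddc_discards: "ddc qs C \<Longrightarrow> discards qs C"
  by (auto simp: ddc_def discards_def)

lemma rel_pmf_setD: "rel_pmf R p q \<Longrightarrow> x \<in> set_pmf p \<Longrightarrow> \<exists>y\<in>set_pmf q. R x y"
proof (erule rel_pmf.cases)
  fix pq assume h: "\<And>x y. (x, y) \<in> set_pmf pq \<Longrightarrow> R x y" "map_pmf fst pq = p" "map_pmf snd pq = q"
    "x \<in> set_pmf p"
  then obtain y where "(x, y) \<in> set_pmf pq" by auto
  then show ?thesis using h by force
qed

lemma rel_pmf_setD2: "rel_pmf R p q \<Longrightarrow> y \<in> set_pmf q \<Longrightarrow> \<exists>x\<in>set_pmf p. R x y"
  using rel_pmf_setD[of "R\<inverse>\<inverse>" q p y] by (simp add: pmf.rel_flip)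

lemma confeq_refl: "confeq C C"
  by (cases C) (auto intro: sc_refl)

lemma confeq_sym: "confeq C C' \<Longrightarrow> confeq C' C"
  by (cases C; cases C') (auto intro: sc_sym)

lemma confeq_trans: "confeq C C' \<Longrightarrow> confeq C' C'' \<Longrightarrow> confeq C C''"
  by (cases C; cases C'; cases C'') (auto intro: sc_trans)

lemma rel_confeq_trans: "rel_pmf confeq a b \<Longrightarrow> rel_pmf confeq b c \<Longrightarrow> rel_pmf confeq a c"
proof -
  assume "rel_pmf confeq a b" "rel_pmf confeq b c"
  then have "rel_pmf (confeq OO confeq) a c" by (auto simp: pmf.rel_compp)
  then show ?thesis by (rule pmf.rel_mono_strong) (auto intro: confeq_trans)
qed

lemma rel_confeq_sym: "rel_pmf confeq a b \<Longrightarrow> rel_pmf confeq b a"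
  by (subst pmf.rel_flip[symmetric]) (rule pmf.rel_mono_strong, assumption, auto intro: confeq_sym)

lemma confeq_Conf_iff: "confeq (Conf s P R) C \<longleftrightarrow> (\<exists>P'. C = Conf s P' R \<and> P \<equiv>\<^sub>s P')"
  by (cases C) auto

lemma no_esem_Bot: "esem C \<pi> \<Theta> \<Longrightarrow> C \<noteq> Bot"
proof (induction rule: esem.induct)
  case (e_cong C C' \<pi> \<Theta>' \<Theta>)
  then show ?case by (cases C; cases C') auto
qed auto

lemma some_disc:
  assumes "P \<equiv>\<^sub>s Par X (DQ qs)" "qbits X \<inter> set qs = {}"
  shows "P \<equiv>\<^sub>s Par (SOME Y. P \<equiv>\<^sub>s Par Y (DQ qs)) (DQ qs)"
    and "(SOME Y. P \<equiv>\<^sub>s Par Y (DQ qs)) \<equiv>\<^sub>s X"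
    and "qbits (SOME Y. P \<equiv>\<^sub>s Par Y (DQ qs)) \<inter> set qs = {}"
proof -
  let ?Y = "SOME Y. P \<equiv>\<^sub>s Par Y (DQ qs)"
  show y: "P \<equiv>\<^sub>s Par ?Y (DQ qs)" using someI[of "\<lambda>Y. P \<equiv>\<^sub>s Par Y (DQ qs)", OF assms(1)] .
  have "Par X (DQ qs) \<equiv>\<^sub>s Par ?Y (DQ qs)" by (rule sc_trans[OF sc_sym[OF assms(1)] y])
  then show "qbits ?Y \<inter> set qs = {}" "?Y \<equiv>\<^sub>s X"
    using cancel[OF _ assms(2)] cancel_disj[OF _ assms(2)] sc_sym by blast+
qed

lemma ctr_Conf: "ctr qs (Conf s P R) = Conf (ptrace qs s) (SOME Y. P \<equiv>\<^sub>s Par Y (DQ qs)) R"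
  by simp

lemma ctr_eq:
  assumes "P \<equiv>\<^sub>s Par X (DQ qs)" "qbits X \<inter> set qs = {}"
  shows "confeq (Conf (ptrace qs s) X R) (ctr qs (Conf s P R))"
  using some_disc[OF assms] by (auto intro: sc_sym)

lemma ctr_confeq:
  assumes "confeq C1 C2" "ddc qs C1"
  shows "confeq (ctr qs C1) (ctr qs C2)" "ddc qs C2"
proof -
  obtain s P R X where c1: "C1 = Conf s P R" "P \<equiv>\<^sub>s Par X (DQ qs)" "qbits X \<inter> set qs = {}"
    using assms(2) by (auto simp: ddc_def)
  obtain P2 where c2: "C2 = Conf s P2 R" "P \<equiv>\<^sub>s P2" using assms(1) c1(1) by (auto simp: confeq_Conf_iff)
  have p2: "P2 \<equiv>\<^sub>s Par X (DQ qs)" using c1 c2 by (blast intro: sc_trans sc_sym)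
  show "ddc qs C2" using c2 p2 c1(3) by (auto simp: ddc_def)
  have "confeq (Conf (ptrace qs s) X R) (ctr qs C1)" using ctr_eq[OF c1(2,3)] c1(1) by simp
  moreover have "confeq (Conf (ptrace qs s) X R) (ctr qs C2)" using ctr_eq[OF p2 c1(3)] c2(1) by simp
  ultimately show "confeq (ctr qs C1) (ctr qs C2)" by (blast intro: confeq_trans confeq_sym)
qed

lemma ostep_out_val: "ostep \<pi> s R \<alpha> \<Delta> \<Longrightarrow> \<alpha> = OutA c v \<Longrightarrow> vq v \<subseteq> qbits R"
  by (induction rule: ostep.induct) (auto dest: plts_out_val)

lemma ctr_ctx: "ctr qs (ctx R' C) = ctx R' (ctr qs C)"
  by (cases C) auto

lemma rel_build:
  assumes "rel_pmf Rr p q" "\<And>x y. x \<in> set_pmf p \<Longrightarrow> y \<in> set_pmf q \<Longrightarrow> Rr x y \<Longrightarrow> S (f x) (g y)"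
  shows "rel_pmf S (map_pmf f p) (map_pmf g q)"
  unfolding pmf.rel_map using assms(1) by (rule pmf.rel_mono_strong) (use assms(2) in auto)

lemma rel_build1:
  assumes "\<And>x. x \<in> set_pmf p \<Longrightarrow> S (f x) (g x)"
  shows "rel_pmf S (map_pmf f p) (map_pmf g p)"
  unfolding pmf.rel_map by (rule rel_pmf_reflI) (use assms in auto)

lemma par_disc_vis:
  assumes "P \<equiv>\<^sub>s Par A D" "plts s P \<alpha> (return_pmf (s, P'))" "\<alpha> \<noteq> TauA" "D = Discard es"
  shows "\<exists>A'. plts s A \<alpha> (return_pmf (s, A')) \<and> P' \<equiv>\<^sub>s Par A' D"
proof -
  obtain \<Delta>' where d: "plts s (Par A D) \<alpha> \<Delta>'" "rel_pmf SR (return_pmf (s, P')) \<Delta>'"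
    using scong_step[OF assms(1,2)] by blast
  obtain \<Delta>1 where d1: "plts s A \<alpha> \<Delta>1" "\<Delta>' = map_pmf (\<lambda>(s', P'). (s', Par P' D)) \<Delta>1"
    using plts_Par_Discard[OF d(1)[unfolded assms(4)]] assms(4) by blast
  obtain A' where "\<Delta>1 = return_pmf (s, A')" using plts_vis[OF d1(1) assms(3)] by blast
  with d d1 show ?thesis by (auto simp: rel_return_pmf SR_def)
qed

lemma esem_fw:
  assumes "esem C \<pi> \<Theta>"
  shows "C = Conf s P R \<Longrightarrow> P \<equiv>\<^sub>s Par A (DQ qs) \<Longrightarrow> qbits A \<inter> set qs = {} \<Longrightarrow> set qs \<subseteq> fst s \<Longrightarrow>
    qbits R \<inter> set qs = {} \<Longrightarrow>
    (\<forall>C'\<in>set_pmf \<Theta>. ddc qs C') \<and> esem (Conf (ptrace qs s) A R) \<pi> (map_pmf (ctr qs) \<Theta>)"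
  using assms
proof (induction arbitrary: s P R A rule: esem.induct)
  case (e_proc s0 P0 \<Delta> R0)
  have eq: "s0 = s" "P0 = P" "R0 = R" using e_proc.prems(1) by simp_all
  have st: "plts s P TauA \<Delta>" using e_proc.hyps eq by simp
  obtain \<Delta>' where d: "plts s (Par A (DQ qs)) TauA \<Delta>'" "rel_pmf SR \<Delta> \<Delta>'"
    using scong_step[OF e_proc.prems(2) st] by blast
  obtain \<Delta>1 where d1: "plts s A TauA \<Delta>1" "\<Delta>' = map_pmf (\<lambda>(s', P'). (s', Par P' (DQ qs))) \<Delta>1"
    using plts_Par_Discard[OF d(1)] by blast
  have disj: "qbits (snd y) \<inter> set qs = {}" if "y \<in> set_pmf \<Delta>1" for y
    using plts_deriv[OF d1(1) that] e_proc.prems(3) by auto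
  have rel1: "rel_pmf (\<lambda>x y. SR x (fst y, Par (snd y) (DQ qs))) \<Delta> \<Delta>1"
    using d(2) unfolding d1(2) pmf.rel_map by (simp add: case_prod_unfold)
  have ddc: "\<forall>C'\<in>set_pmf (map_pmf (\<lambda>(s', P'). Conf s' P' R0) \<Delta>). ddc qs C'"
  proof
    fix C' assume "C' \<in> set_pmf (map_pmf (\<lambda>(s', P'). Conf s' P' R0) \<Delta>)"
    then obtain x where x: "x \<in> set_pmf \<Delta>" "C' = Conf (fst x) (snd x) R0" by (auto simp: case_prod_unfold)
    obtain y where y: "y \<in> set_pmf \<Delta>1" "SR x (fst y, Par (snd y) (DQ qs))" using rel_pmf_setD[OF rel1 x(1)] by blast
    have "snd x \<equiv>\<^sub>s Par (snd y) (DQ qs)" using y(2) unfolding SR_def by simp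
    then show "ddc qs C'" unfolding ddc_def using x(2) disj[OF y(1)] by blast
  qed
  have t: "esem (Conf (ptrace qs s) A R) Diamond
      (map_pmf (\<lambda>(s', P'). Conf s' P' R) (map_pmf (apfst (ptrace qs)) \<Delta>1))"
    by (rule esem.e_proc, rule plts_ptrace_fw[OF d1(1) e_proc.prems(3,4)])
  have "rel_pmf confeq (map_pmf (\<lambda>y. Conf (ptrace qs (fst y)) (snd y) R) \<Delta>1)
      (map_pmf (\<lambda>x. ctr qs (Conf (fst x) (snd x) R)) \<Delta>)"
  proof (rule rel_build[OF pmf.rel_flip[THEN iffD2, OF rel1]])
    fix y x assume h: "y \<in> set_pmf \<Delta>1" "x \<in> set_pmf \<Delta>" "(\<lambda>x y. SR x (fst y, Par (snd y) (DQ qs)))\<inverse>\<inverse> y x"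
    then have "fst x = fst y" "snd x \<equiv>\<^sub>s Par (snd y) (DQ qs)" unfolding SR_def by simp_all
    then show "confeq (Conf (ptrace qs (fst y)) (snd y) R) (ctr qs (Conf (fst x) (snd x) R))"
      using ctr_eq[of "snd x" "snd y" qs "fst x" R] disj[OF h(1)] by simp
  qed
  then have "rel_pmf confeq (map_pmf (\<lambda>(s', P'). Conf s' P' R) (map_pmf (apfst (ptrace qs)) \<Delta>1))
      (map_pmf (ctr qs) (map_pmf (\<lambda>(s', P'). Conf s' P' R0) \<Delta>))"
    using eq by (simp add: pmf.map_comp comp_def case_prod_unfold)
  then have "esem (Conf (ptrace qs s) A R) Diamond (map_pmf (ctr qs) (map_pmf (\<lambda>(s', P'). Conf s' P' R0) \<Delta>))" by (rule esem.e_cong[OF confeq_refl t])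
  with ddc show ?case by (rule conjI)
next
  case (e_obs \<pi> s0 R0 \<Delta> P0)
  have eq: "s0 = s" "P0 = P" "R0 = R" using e_obs.prems(1) by simp_all
  have st: "ostep \<pi> s R TauA \<Delta>" using e_obs.hyps eq by simp
  have ddc: "\<forall>C'\<in>set_pmf (map_pmf (\<lambda>(s', R'). Conf s' P0 R') \<Delta>). ddc qs C'"
    unfolding ddc_def using e_obs.prems(2,3) eq(2) by (auto simp: case_prod_unfold)
  have t: "esem (Conf (ptrace qs s) A R) (Path \<pi>)
      (map_pmf (\<lambda>(s', R'). Conf s' A R') (map_pmf (apfst (ptrace qs)) \<Delta>))"
    by (rule esem.e_obs, rule ostep_ptrace_fw[OF st e_obs.prems(5,4)])
  have "rel_pmf confeq (map_pmf (\<lambda>y. Conf (ptrace qs (fst y)) A (snd y)) \<Delta>)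
      (map_pmf (\<lambda>x. ctr qs (Conf (fst x) P (snd x))) \<Delta>)"
    by (rule rel_build1) (rule ctr_eq[OF e_obs.prems(2,3)])
  then have "rel_pmf confeq (map_pmf (\<lambda>(s', R'). Conf s' A R') (map_pmf (apfst (ptrace qs)) \<Delta>))
      (map_pmf (ctr qs) (map_pmf (\<lambda>(s', R'). Conf s' P0 R') \<Delta>))"
    using eq by (simp add: pmf.map_comp comp_def case_prod_unfold)
  then have "esem (Conf (ptrace qs s) A R) (Path \<pi>) (map_pmf (ctr qs) (map_pmf (\<lambda>(s', R'). Conf s' P0 R') \<Delta>))" by (rule esem.e_cong[OF confeq_refl t])
  with ddc show ?case by (rule conjI)
next
  case (e_obs_out \<pi> s0 R0 c v R' P0 P')
  have eq: "s0 = s" "P0 = P" "R0 = R" using e_obs_out.prems(1) by simp_all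
  obtain A' where a: "plts s A (InA c v) (return_pmf (s, A'))" "P' \<equiv>\<^sub>s Par A' (DQ qs)"
    using par_disc_vis[OF e_obs_out.prems(2), of s "InA c v" P' "qargs qs"] e_obs_out.hyps(2) eq by auto
  have "vq v \<subseteq> qbits R" using ostep_out_val[OF e_obs_out.hyps(1)] eq by simp
  moreover have "qbits A' \<subseteq> qbits A \<union> vq v" using plts_deriv[OF a(1), of "(s, A')"] by simp
  ultimately have disj: "qbits A' \<inter> set qs = {}"
    using e_obs_out.prems(3,5) by blast
  have o: "ostep \<pi> (ptrace qs s) R (OutA c v) (return_pmf (ptrace qs s, R'))"
    by (rule ovis_state[of \<pi> s]) (use e_obs_out.hyps(1) eq in simp_all)
  have p: "plts (ptrace qs s) A (InA c v) (return_pmf (ptrace qs s, A'))"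
    by (rule vis_state[OF a(1)]) simp
  have t: "esem (Conf (ptrace qs s) A R) (Path \<pi>) (return_pmf (Conf (ptrace qs s) A' R'))"
    by (rule esem.e_obs_out[OF o p])
  have "confeq (Conf (ptrace qs s) A' R') (ctr qs (Conf s P' R'))" by (rule ctr_eq[OF a(2) disj])
  then have "rel_pmf confeq (return_pmf (Conf (ptrace qs s) A' R')) (map_pmf (ctr qs) (return_pmf (Conf s0 P' R')))"
    using eq by (simp add: rel_return_pmf)
  moreover have "\<forall>C'\<in>set_pmf (return_pmf (Conf s0 P' R')). ddc qs C'" using a(2) disj by (auto simp: ddc_def)
  ultimately show ?case using esem.e_cong[OF confeq_refl t] by (intro conjI) simp_all
next
  case (e_obs_in \<pi> s0 R0 c v R' P0 P')
  have eq: "s0 = s" "P0 = P" "R0 = R" using e_obs_in.prems(1) by simp_all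
  obtain A' where a: "plts s A (OutA c v) (return_pmf (s, A'))" "P' \<equiv>\<^sub>s Par A' (DQ qs)"
    using par_disc_vis[OF e_obs_in.prems(2), of s "OutA c v" P' "qargs qs"] e_obs_in.hyps(2) eq by auto
  have disj: "qbits A' \<inter> set qs = {}"
    using plts_deriv[OF a(1), of "(s, A')"] e_obs_in.prems(3) by auto
  have o: "ostep \<pi> (ptrace qs s) R (InA c v) (return_pmf (ptrace qs s, R'))"
    by (rule ovis_state[of \<pi> s]) (use e_obs_in.hyps(1) eq in simp_all)
  have p: "plts (ptrace qs s) A (OutA c v) (return_pmf (ptrace qs s, A'))"
    by (rule vis_state[OF a(1)]) simp
  have t: "esem (Conf (ptrace qs s) A R) (Path \<pi>) (return_pmf (Conf (ptrace qs s) A' R'))"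
    by (rule esem.e_obs_in[OF o p])
  have "confeq (Conf (ptrace qs s) A' R') (ctr qs (Conf s P' R'))" by (rule ctr_eq[OF a(2) disj])
  then have "rel_pmf confeq (return_pmf (Conf (ptrace qs s) A' R')) (map_pmf (ctr qs) (return_pmf (Conf s0 P' R')))"
    using eq by (simp add: rel_return_pmf)
  moreover have "\<forall>C'\<in>set_pmf (return_pmf (Conf s0 P' R')). ddc qs C'" using a(2) disj by (auto simp: ddc_def)
  ultimately show ?case using esem.e_cong[OF confeq_refl t] by (intro conjI) simp_all
next
  case (e_cong C C' \<pi> \<Theta>' \<Theta>)
  obtain P2 where c2: "C' = Conf s P2 R" "P \<equiv>\<^sub>s P2"
    using e_cong.hyps(1) e_cong.prems(1) by (auto simp: confeq_Conf_iff)
  have p2: "P2 \<equiv>\<^sub>s Par A (DQ qs)" by (rule sc_trans[OF sc_sym[OF c2(2)] e_cong.prems(2)])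
  have IH: "(\<forall>C'\<in>set_pmf \<Theta>'. ddc qs C') \<and> esem (Conf (ptrace qs s) A R) \<pi> (map_pmf (ctr qs) \<Theta>')"
    using e_cong.IH[OF c2(1) p2 e_cong.prems(3-5)] .
  have ddc: "\<forall>C''\<in>set_pmf \<Theta>. ddc qs C''"
  proof
    fix C'' assume "C'' \<in> set_pmf \<Theta>"
    then obtain C1 where "C1 \<in> set_pmf \<Theta>'" "confeq C1 C''" using rel_pmf_setD2[OF e_cong.hyps(3)] by blast
    then show "ddc qs C''" using IH ctr_confeq(2) by blast
  qed
  have "rel_pmf confeq (map_pmf (ctr qs) \<Theta>') (map_pmf (ctr qs) \<Theta>)"
    by (rule rel_build[OF e_cong.hyps(3)]) (use IH ctr_confeq(1) in blast)
  then have "esem (Conf (ptrace qs s) A R) \<pi> (map_pmf (ctr qs) \<Theta>)"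
    by (rule esem.e_cong[OF confeq_refl conjunct2[OF IH]])
  with ddc show ?case by (rule conjI)
qed

lemma esem_bw:
  assumes "esem C \<pi> \<Theta>"
  shows "C = Conf (ptrace qs s) A R \<Longrightarrow> qbits A \<inter> set qs = {} \<Longrightarrow> set qs \<subseteq> fst s \<Longrightarrow>
    qbits R \<inter> set qs = {} \<Longrightarrow>
    \<exists>\<Theta>0. esem (Conf s (Par A (DQ qs)) R) \<pi> \<Theta>0 \<and> (\<forall>C'\<in>set_pmf \<Theta>0. ddc qs C') \<and>
         rel_pmf confeq \<Theta> (map_pmf (ctr qs) \<Theta>0)"
  using assms
proof (induction arbitrary: A rule: esem.induct)
  case (e_proc t P0 \<Delta> R0)
  have eq: "t = ptrace qs s" "P0 = A" "R0 = R" using e_proc.prems(1) by simp_all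
  obtain \<Delta>0 where d0: "plts s A TauA \<Delta>0" "\<Delta> = map_pmf (apfst (ptrace qs)) \<Delta>0"
    using plts_ptrace_bw[OF e_proc.hyps[unfolded eq] refl e_proc.prems(3)] by blast
  have disj: "qbits (snd y) \<inter> set qs = {}" if "y \<in> set_pmf \<Delta>0" for y
    using plts_deriv[OF d0(1) that] e_proc.prems(2) by auto
  let ?\<Theta>0 = "map_pmf (\<lambda>(s', P'). Conf s' P' R) (map_pmf (\<lambda>(s', P'). (s', Par P' (DQ qs))) \<Delta>0)"
  have t: "esem (Conf s (Par A (DQ qs)) R) Diamond ?\<Theta>0"
    by (rule esem.e_proc, rule plts.p_parl, rule d0(1))
  have ddc: "\<forall>C'\<in>set_pmf ?\<Theta>0. ddc qs C'"
  proof
    fix C' assume "C' \<in> set_pmf ?\<Theta>0"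
    then obtain y where y: "y \<in> set_pmf \<Delta>0" "C' = Conf (fst y) (Par (snd y) (DQ qs)) R"
      by (auto simp: case_prod_unfold)
    show "ddc qs C'" unfolding ddc_def using y(2) disj[OF y(1)] sc_refl by blast
  qed
  have "rel_pmf confeq (map_pmf (\<lambda>y. Conf (ptrace qs (fst y)) (snd y) R) \<Delta>0)
      (map_pmf (\<lambda>y. ctr qs (Conf (fst y) (Par (snd y) (DQ qs)) R)) \<Delta>0)"
    by (rule rel_build1, rule ctr_eq[OF sc_refl disj])
  then have "rel_pmf confeq (map_pmf (\<lambda>(s', P'). Conf s' P' R0) \<Delta>) (map_pmf (ctr qs) ?\<Theta>0)"
    using eq d0(2) by (simp add: pmf.map_comp comp_def case_prod_unfold)
  then show ?case using t ddc by blast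
next
  case (e_obs \<pi> t R0 \<Delta> P0)
  have eq: "t = ptrace qs s" "P0 = A" "R0 = R" using e_obs.prems(1) by simp_all
  obtain \<Delta>0 where d0: "ostep \<pi> s R TauA \<Delta>0" "\<Delta> = map_pmf (apfst (ptrace qs)) \<Delta>0"
    using ostep_ptrace_bw[OF e_obs.hyps[unfolded eq] refl e_obs.prems(3)] by blast
  let ?\<Theta>0 = "map_pmf (\<lambda>(s', R'). Conf s' (Par A (DQ qs)) R') \<Delta>0"
  have t: "esem (Conf s (Par A (DQ qs)) R) (Path \<pi>) ?\<Theta>0"
    by (rule esem.e_obs, rule d0(1))
  have ddc: "\<forall>C'\<in>set_pmf ?\<Theta>0. ddc qs C'"
    unfolding ddc_def using e_obs.prems(2) sc_refl by (auto simp: case_prod_unfold)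
  have "rel_pmf confeq (map_pmf (\<lambda>y. Conf (ptrace qs (fst y)) A (snd y)) \<Delta>0)
      (map_pmf (\<lambda>y. ctr qs (Conf (fst y) (Par A (DQ qs)) (snd y))) \<Delta>0)"
    by (rule rel_build1, rule ctr_eq[OF sc_refl e_obs.prems(2)])
  then have "rel_pmf confeq (map_pmf (\<lambda>(s', R'). Conf s' P0 R') \<Delta>) (map_pmf (ctr qs) ?\<Theta>0)"
    using eq d0(2) by (simp add: pmf.map_comp comp_def case_prod_unfold)
  then show ?case using t ddc by blast
next
  case (e_obs_out \<pi> t R0 c v R' P0 P')
  have eq: "t = ptrace qs s" "P0 = A" "R0 = R" using e_obs_out.prems(1) by simp_all
  have o: "ostep \<pi> s R (OutA c v) (return_pmf (s, R'))"
    by (rule ovis_state[of \<pi> t]) (use e_obs_out.hyps(1) eq in simp_all)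
  have p: "plts s A (InA c v) (return_pmf (s, P'))"
    by (rule vis_state[of t]) (use e_obs_out.hyps(2) eq in simp_all)
  have pp: "plts s (Par A (DQ qs)) (InA c v) (return_pmf (s, Par P' (DQ qs)))" by (rule parl_ret[OF p])
  have t: "esem (Conf s (Par A (DQ qs)) R) (Path \<pi>) (return_pmf (Conf s (Par P' (DQ qs)) R'))"
    by (rule esem.e_obs_out[OF o pp])
  have "vq v \<subseteq> qbits R" using ostep_out_val[OF o] by simp
  moreover have "qbits P' \<subseteq> qbits A \<union> vq v" using plts_deriv[OF p, of "(s, P')"] by simp
  ultimately have disj: "qbits P' \<inter> set qs = {}" using e_obs_out.prems(2,4) by blast
  have "confeq (Conf (ptrace qs s) P' R') (ctr qs (Conf s (Par P' (DQ qs)) R'))"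
    by (rule ctr_eq[OF sc_refl disj])
  then have "rel_pmf confeq (return_pmf (Conf t P' R')) (map_pmf (ctr qs) (return_pmf (Conf s (Par P' (DQ qs)) R')))"
    using eq by (simp add: rel_return_pmf)
  moreover have "\<forall>C'\<in>set_pmf (return_pmf (Conf s (Par P' (DQ qs)) R')). ddc qs C'"
    unfolding ddc_def using disj sc_refl by auto
  ultimately show ?case using t by blast
next
  case (e_obs_in \<pi> t R0 c v R' P0 P')
  have eq: "t = ptrace qs s" "P0 = A" "R0 = R" using e_obs_in.prems(1) by simp_all
  have o: "ostep \<pi> s R (InA c v) (return_pmf (s, R'))"
    by (rule ovis_state[of \<pi> t]) (use e_obs_in.hyps(1) eq in simp_all)
  have p: "plts s A (OutA c v) (return_pmf (s, P'))"
    by (rule vis_state[of t]) (use e_obs_in.hyps(2) eq in simp_all)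
  have pp: "plts s (Par A (DQ qs)) (OutA c v) (return_pmf (s, Par P' (DQ qs)))" by (rule parl_ret[OF p])
  have t: "esem (Conf s (Par A (DQ qs)) R) (Path \<pi>) (return_pmf (Conf s (Par P' (DQ qs)) R'))"
    by (rule esem.e_obs_in[OF o pp])
  have "qbits P' \<subseteq> qbits A" using plts_deriv[OF p, of "(s, P')"] by simp
  then have disj: "qbits P' \<inter> set qs = {}" using e_obs_in.prems(2) by blast
  have "confeq (Conf (ptrace qs s) P' R') (ctr qs (Conf s (Par P' (DQ qs)) R'))"
    by (rule ctr_eq[OF sc_refl disj])
  then have "rel_pmf confeq (return_pmf (Conf t P' R')) (map_pmf (ctr qs) (return_pmf (Conf s (Par P' (DQ qs)) R')))"
    using eq by (simp add: rel_return_pmf)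
  moreover have "\<forall>C'\<in>set_pmf (return_pmf (Conf s (Par P' (DQ qs)) R')). ddc qs C'"
    unfolding ddc_def using disj sc_refl by auto
  ultimately show ?case using t by blast
next
  case (e_cong C C' \<pi> \<Theta>' \<Theta>)
  obtain A2 where c2: "C' = Conf (ptrace qs s) A2 R" "A \<equiv>\<^sub>s A2"
    using e_cong.hyps(1) e_cong.prems(1) by (auto simp: confeq_Conf_iff)
  have d2: "qbits A2 \<inter> set qs = {}" using scong_qbits[OF c2(2)] e_cong.prems(2) by simp
  obtain \<Theta>0 where IH: "esem (Conf s (Par A2 (DQ qs)) R) \<pi> \<Theta>0" "\<forall>C'\<in>set_pmf \<Theta>0. ddc qs C'"
      "rel_pmf confeq \<Theta>' (map_pmf (ctr qs) \<Theta>0)"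
    using e_cong.IH[OF c2(1) d2 e_cong.prems(3,4)] by blast
  have cq: "confeq (Conf s (Par A (DQ qs)) R) (Conf s (Par A2 (DQ qs)) R)"
    using sc_par[OF c2(2) sc_refl] by simp
  have rr: "rel_pmf confeq \<Theta>0 \<Theta>0" by (rule rel_pmf_reflI, rule confeq_refl)
  have "esem (Conf s (Par A (DQ qs)) R) \<pi> \<Theta>0" by (rule esem.e_cong[OF cq IH(1) rr])
  moreover have "rel_pmf confeq \<Theta> (map_pmf (ctr qs) \<Theta>0)"
    by (rule rel_confeq_trans[OF rel_confeq_sym[OF e_cong.hyps(3)] IH(3)])
  ultimately show ?case using IH(2) by blast
qed

lemma setup_elem:
  assumes "C0 \<in> set_pmf \<Delta>" "wd_tr qs \<Delta>" "\<forall>C \<in> set_pmf (octx R' \<Delta>). wf_conf C"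
  shows "C0 = Bot \<or> (\<exists>s P R0 P1. C0 = Conf s P R0 \<and> P \<equiv>\<^sub>s Par P1 (DQ qs) \<and> qbits P1 \<inter> set qs = {} \<and>
            set qs \<subseteq> fst s \<and> qbits (Par R0 R') \<inter> set qs = {})"
proof (cases C0)
  case (Conf s P R0)
  have "ctx R' C0 \<in> set_pmf (octx R' \<Delta>)" using assms(1) by (simp add: octx_def)
  from bspec[OF assms(3) this] Conf have wf: "wf_conf (Conf s P (Par R0 R'))" by simp
  obtain P1 where p1: "P \<equiv>\<^sub>s Par P1 (DQ qs)"
    using assms(1,2) Conf by (auto simp: wd_tr_def discards_def)
  have lin: "lin P" using wf by simp
  have d1: "qbits P1 \<inter> set qs = {}" by (rule lin_disj[OF p1 lin])
  have qP: "qbits P = qbits P1 \<union> set qs" using scong_qbits[OF p1] by simp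
  have "set qs \<subseteq> fst s" using wf qP by auto
  moreover have "qbits (Par R0 R') \<inter> set qs = {}" using wf qP by auto
  ultimately show ?thesis using Conf p1 d1 by blast
qed simp

lemma fw_elem:
  assumes "C \<in> set_pmf (octx R' \<Delta>)" "wd_tr qs \<Delta>" "\<forall>C \<in> set_pmf (octx R' \<Delta>). wf_conf C"
    and "esem C \<pi> \<Theta>"
  shows "(\<forall>C'\<in>set_pmf \<Theta>. ddc qs C') \<and> esem (ctr qs C) \<pi> (map_pmf (ctr qs) \<Theta>)"
proof -
  obtain C0 where c0: "C0 \<in> set_pmf \<Delta>" "C = ctx R' C0" using assms(1) by (auto simp: octx_def)
  from setup_elem[OF c0(1) assms(2,3)] show ?thesis
  proof
    assume "C0 = Bot"
    then show ?thesis using c0 no_esem_Bot[OF assms(4)] by simp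
  next
    assume "\<exists>s P R0 P1. C0 = Conf s P R0 \<and> P \<equiv>\<^sub>s Par P1 (DQ qs) \<and> qbits P1 \<inter> set qs = {} \<and>
            set qs \<subseteq> fst s \<and> qbits (Par R0 R') \<inter> set qs = {}"
    then obtain s P R0 P1 where h: "C0 = Conf s P R0" "P \<equiv>\<^sub>s Par P1 (DQ qs)" "qbits P1 \<inter> set qs = {}"
      "set qs \<subseteq> fst s" "qbits (Par R0 R') \<inter> set qs = {}" by blast
    have C: "C = Conf s P (Par R0 R')" using c0 h by simp
    have fw: "(\<forall>C'\<in>set_pmf \<Theta>. ddc qs C') \<and> esem (Conf (ptrace qs s) P1 (Par R0 R')) \<pi> (map_pmf (ctr qs) \<Theta>)"
      by (rule esem_fw[OF assms(4) C h(2,3,4,5)])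
    have cq: "confeq (ctr qs C) (Conf (ptrace qs s) P1 (Par R0 R'))"
      using confeq_sym[OF ctr_eq[OF h(2,3), of s "Par R0 R'"]] C by simp
    have rr: "rel_pmf confeq (map_pmf (ctr qs) \<Theta>) (map_pmf (ctr qs) \<Theta>)" by (rule rel_pmf_reflI, rule confeq_refl)
    have "esem (ctr qs C) \<pi> (map_pmf (ctr qs) \<Theta>)" by (rule esem.e_cong[OF cq conjunct2[OF fw] rr])
    then show ?thesis using fw by blast
  qed
qed

lemma bw_elem:
  assumes "C0 \<in> set_pmf \<Delta>" "wd_tr qs \<Delta>" "\<forall>C \<in> set_pmf (octx R' \<Delta>). wf_conf C"
    and "esem (ctx R' (ctr qs C0)) \<pi> \<Theta>"
  shows "\<exists>\<Theta>0. esem (ctx R' C0) \<pi> \<Theta>0 \<and> (\<forall>C'\<in>set_pmf \<Theta>0. ddc qs C') \<and> rel_pmf confeq \<Theta> (map_pmf (ctr qs) \<Theta>0)"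
proof -
  from setup_elem[OF assms(1-3)] show ?thesis
  proof
    assume "C0 = Bot"
    then show ?thesis using no_esem_Bot[OF assms(4)] by simp
  next
    assume "\<exists>s P R0 P1. C0 = Conf s P R0 \<and> P \<equiv>\<^sub>s Par P1 (DQ qs) \<and> qbits P1 \<inter> set qs = {} \<and>
            set qs \<subseteq> fst s \<and> qbits (Par R0 R') \<inter> set qs = {}"
    then obtain s P R0 P1 where h: "C0 = Conf s P R0" "P \<equiv>\<^sub>s Par P1 (DQ qs)" "qbits P1 \<inter> set qs = {}"
      "set qs \<subseteq> fst s" "qbits (Par R0 R') \<inter> set qs = {}" by blast
    let ?Y = "SOME Y. P \<equiv>\<^sub>s Par Y (DQ qs)"
    have y: "P \<equiv>\<^sub>s Par ?Y (DQ qs)" "qbits ?Y \<inter> set qs = {}" using some_disc[OF h(2,3)] by blast+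
    have e: "esem (Conf (ptrace qs s) ?Y (Par R0 R')) \<pi> \<Theta>" using assms(4) h(1) by simp
    obtain \<Theta>0 where b: "esem (Conf s (Par ?Y (DQ qs)) (Par R0 R')) \<pi> \<Theta>0" "\<forall>C'\<in>set_pmf \<Theta>0. ddc qs C'"
      "rel_pmf confeq \<Theta> (map_pmf (ctr qs) \<Theta>0)"
      using esem_bw[OF e refl y(2) h(4,5)] by blast
    have cq: "confeq (ctx R' C0) (Conf s (Par ?Y (DQ qs)) (Par R0 R'))" using h(1) y(1) by simp
    have rr: "rel_pmf confeq \<Theta>0 \<Theta>0" by (rule rel_pmf_reflI, rule confeq_refl)
    have "esem (ctx R' C0) \<pi> \<Theta>0" by (rule esem.e_cong[OF cq b(1) rr])
    then show ?thesis using b(2,3) by blast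
  qed
qed

lemma octx_ptr: "octx R' (ptr qs \<Delta>) = map_pmf (ctr qs) (octx R' \<Delta>)"
  by (simp add: octx_def ptr_def pmf.map_comp comp_def ctr_ctx)

theorem lemmaD1:
  fixes \<Delta> :: "conf pmf" and qs :: "qubit list" and R' :: proc and \<pi> :: idx
  assumes "wd_tr qs \<Delta>"
    and "is_obs R'"
    and "\<forall>C \<in> set_pmf (octx R' \<Delta>). wf_conf C"
  shows "(\<forall>\<Delta>'. esem_d \<pi> (octx R' \<Delta>) \<Delta>' \<longrightarrow>
             wd_tr qs \<Delta>' \<and> esem_d \<pi> (octx R' (ptr qs \<Delta>)) (ptr qs \<Delta>'))
       \<and> (\<forall>\<Theta>. esem_d \<pi> (octx R' (ptr qs \<Delta>)) \<Theta> \<longrightarrow>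
             (\<exists>\<Delta>'. esem_d \<pi> (octx R' \<Delta>) \<Delta>' \<and> wd_tr qs \<Delta>' \<and> rel_pmf confeq \<Theta> (ptr qs \<Delta>')))"
proof (intro conjI allI impI)
  fix \<Delta>' assume "esem_d \<pi> (octx R' \<Delta>) \<Delta>'"
  then obtain \<Phi> where phi: "map_pmf fst \<Phi> = octx R' \<Delta>" "\<forall>(C, \<Theta>') \<in> set_pmf \<Phi>. esem C \<pi> \<Theta>'"
    "\<Delta>' = bind_pmf \<Phi> snd" by (auto simp: esem_d_def)
  have el: "(\<forall>C'\<in>set_pmf (snd x). ddc qs C') \<and> esem (ctr qs (fst x)) \<pi> (map_pmf (ctr qs) (snd x))"
    if "x \<in> set_pmf \<Phi>" for x
  proof (rule fw_elem[OF _ assms(1,3)])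
    show "fst x \<in> set_pmf (octx R' \<Delta>)" using that phi(1)[symmetric] by auto
    show "esem (fst x) \<pi> (snd x)" using that phi(2) by (auto simp: case_prod_unfold)
  qed
  show "wd_tr qs \<Delta>'" unfolding wd_tr_def phi(3) using el ddc_discards by auto
  let ?\<Phi>2 = "map_pmf (\<lambda>x. (ctr qs (fst x), map_pmf (ctr qs) (snd x))) \<Phi>"
  have "map_pmf fst ?\<Phi>2 = octx R' (ptr qs \<Delta>)"
    by (simp add: pmf.map_comp comp_def octx_ptr phi(1)[symmetric])
  moreover have "\<forall>(C, \<Theta>') \<in> set_pmf ?\<Phi>2. esem C \<pi> \<Theta>'" using el by auto
  moreover have "ptr qs \<Delta>' = bind_pmf ?\<Phi>2 snd"
    by (simp add: ptr_def phi(3) map_bind_pmf bind_map_pmf)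
  ultimately show "esem_d \<pi> (octx R' (ptr qs \<Delta>)) (ptr qs \<Delta>')"
    unfolding esem_d_def by blast
next
  fix \<Theta> assume "esem_d \<pi> (octx R' (ptr qs \<Delta>)) \<Theta>"
  then obtain \<Phi> where phi: "map_pmf fst \<Phi> = octx R' (ptr qs \<Delta>)" "\<forall>(C, \<Theta>') \<in> set_pmf \<Phi>. esem C \<pi> \<Theta>'"
    "\<Theta> = bind_pmf \<Phi> snd" by (auto simp: esem_d_def)
  have "map_pmf (\<lambda>C0. ctx R' (ctr qs C0)) \<Delta> = map_pmf fst \<Phi>"
    by (simp add: phi(1) octx_def ptr_def pmf.map_comp comp_def)
  then have "rel_pmf (=) (map_pmf (\<lambda>C0. ctx R' (ctr qs C0)) \<Delta>) (map_pmf fst \<Phi>)"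
    by (simp add: pmf.rel_eq)
  then have "rel_pmf (\<lambda>C0 x. ctx R' (ctr qs C0) = fst x) \<Delta> \<Phi>"
    unfolding pmf.rel_map .
  then obtain J where J: "\<And>C0 x. (C0, x) \<in> set_pmf J \<Longrightarrow> ctx R' (ctr qs C0) = fst x"
    "map_pmf fst J = \<Delta>" "map_pmf snd J = \<Phi>"
    by (erule rel_pmf.cases)
  define G where "G = (\<lambda>p :: conf \<times> (conf \<times> conf pmf). SOME \<Theta>0. esem (ctx R' (fst p)) \<pi> \<Theta>0 \<and> (\<forall>C'\<in>set_pmf \<Theta>0. ddc qs C') \<and>
      rel_pmf confeq (snd (snd p)) (map_pmf (ctr qs) \<Theta>0))"
  have G: "esem (ctx R' (fst p)) \<pi> (G p) \<and> (\<forall>C'\<in>set_pmf (G p). ddc qs C') \<and>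
      rel_pmf confeq (snd (snd p)) (map_pmf (ctr qs) (G p))" if "p \<in> set_pmf J" for p
  proof -
    obtain C0 x where p: "p = (C0, x)" by (cases p)
    have c0: "C0 \<in> set_pmf \<Delta>" using that p J(2) by force
    have x: "x \<in> set_pmf \<Phi>" using that p J(3) by force
    have "esem (fst x) \<pi> (snd x)" using x phi(2) by (auto simp: case_prod_unfold)
    then have "esem (ctx R' (ctr qs C0)) \<pi> (snd x)" using J(1)[OF that[unfolded p]] by simp
    then have "\<exists>\<Theta>0. esem (ctx R' C0) \<pi> \<Theta>0 \<and> (\<forall>C'\<in>set_pmf \<Theta>0. ddc qs C') \<and> rel_pmf confeq (snd x) (map_pmf (ctr qs) \<Theta>0)"
      by (rule bw_elem[OF c0 assms(1,3)])
    then show ?thesis unfolding G_def p fst_conv snd_conv by (rule someI_ex)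
  qed
  let ?\<Phi>0 = "map_pmf (\<lambda>p. (ctx R' (fst p), G p)) J"
  let ?\<Delta>' = "bind_pmf ?\<Phi>0 snd"
  have "esem_d \<pi> (octx R' \<Delta>) ?\<Delta>'"
    unfolding esem_d_def
  proof (intro exI conjI)
    show "map_pmf fst ?\<Phi>0 = octx R' \<Delta>" by (simp add: pmf.map_comp comp_def octx_def J(2)[symmetric])
    show "\<forall>(C, \<Theta>') \<in> set_pmf ?\<Phi>0. esem C \<pi> \<Theta>'" using G by auto
  qed simp
  moreover have "wd_tr qs ?\<Delta>'" unfolding wd_tr_def using G ddc_discards by auto
  moreover have "rel_pmf confeq \<Theta> (ptr qs ?\<Delta>')"
  proof -
    have "\<Theta> = bind_pmf J (\<lambda>p. snd (snd p))" by (simp add: phi(3) J(3)[symmetric] bind_map_pmf)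
    moreover have "ptr qs ?\<Delta>' = bind_pmf J (\<lambda>p. map_pmf (ctr qs) (G p))"
      by (simp add: ptr_def map_bind_pmf bind_map_pmf)
    moreover have "rel_pmf confeq (bind_pmf J (\<lambda>p. snd (snd p))) (bind_pmf J (\<lambda>p. map_pmf (ctr qs) (G p)))"
    proof (rule rel_pmf_bindI[where R="\<lambda>x y. x = y \<and> x \<in> set_pmf J"])
      show "rel_pmf (\<lambda>x y. x = y \<and> x \<in> set_pmf J) J J" by (rule rel_pmf_reflI) simp
    qed (use G in auto)
    ultimately show ?thesis by simp
  qed
  ultimately show "\<exists>\<Delta>'. esem_d \<pi> (octx R' \<Delta>) \<Delta>' \<and> wd_tr qs \<Delta>' \<and> rel_pmf confeq \<Theta> (ptr qs \<Delta>')"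
    by blast
qed

end
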